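(* Let $\mathrm{M}=\langle e_1+I,\ e_2+I,\ A\rangle$, where $e_1,e_2$ are the standard basis vectors of $E^2$ and $A=\begin{pmatrix}0&1\\1&0\end{pmatrix}$ transposes $e_1$ and $e_2$. Then the Lie group $\mathrm{Sym}(\mathrm{M})$ is isomorphic to $\mathrm{O}(2)$, $\mathrm{Sym}(\mathrm{M})=\mathrm{Aff}(\mathrm{M})$, and $\Omega:\mathrm{Aff}(\mathrm{M})\to\mathrm{Out}(\mathrm{M})$ maps the subgroup $\{\mathrm{idt.}, (-I)_\star\}$ isomorphically onto $\mathrm{Out}(\mathrm{M})$.
   Context: Affine maps of $E^2$ are written $a+A$ ($x\mapsto a+Ax$); $a+I$ is translation by $a$. For a 2-space group $\mathrm{M}$, let $N_A(\mathrm{M})$ be its normalizer in the affine group of $E^2$. Each $a+A\in N_A(\mathrm{M})$ induces an affinity $(a+A)_\star:\mathrm{M}x\mapsto\mathrm{M}(a+Ax)$ of the flat orbifold $E^2/\mathrm{M}$; $\mathrm{Aff}(\mathrm{M})$ is the group of all such affinities, and $\mathrm{Sym}(\mathrm{M})=\mathrm{Isom}(E^2/\mathrm{M})$ is its subgroup of isometries of the flat orbifold $E^2/\mathrm{M}$ (a Lie group). idt. denotes the identity. $\Omega:\mathrm{Aff}(\mathrm{M})\to\mathrm{Out}(\mathrm{M})$ sends $(a+A)_\star$ to the outer automorphism class of $g\mapsto (a+A)g(a+A)^{-1}$ on $\mathrm{M}$. Here $E^2/\mathrm{M}$ is a Möbius band. *)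

theory Defs
  imports "HOL-Analysis.Analysis" "HOL-Algebra.Bij" "HOL-Algebra.Generated_Groups" "HOL-Algebra.Coset"
begin

text \<open>An affine map a+A (x \<mapsto> a + A x) is represented by the pair (a, A).\<close>

type_synonym aff = "(real^2) \<times> (real^2^2)"

definition aff_apply :: "aff \<Rightarrow> real^2 \<Rightarrow> real^2" where
  "aff_apply g x = fst g + snd g *v x"

definition aff_mult :: "aff \<Rightarrow> aff \<Rightarrow> aff" where
  "aff_mult g h = (fst g + snd g *v fst h, snd g ** snd h)"

definition aff_inv :: "aff \<Rightarrow> aff" where
  "aff_inv g = (- (matrix_inv (snd g) *v fst g), matrix_inv (snd g))"

definition AffGroup :: "aff monoid" where
  "AffGroup = \<lparr>carrier = {g. invertible (snd g)}, mult = aff_mult, one = (0, mat 1)\<rparr>"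

definition matA :: "real^2^2" where
  "matA = vector [vector [0, 1], vector [1, 0]]"

definition Mcm :: "aff set" where
  "Mcm = generate AffGroup {(axis 1 1, mat 1), (axis 2 1, mat 1), (0, matA)}"

definition Mgrp :: "aff set \<Rightarrow> aff monoid" where
  "Mgrp M = AffGroup\<lparr>carrier := M\<rparr>"

definition conj_aff :: "aff \<Rightarrow> aff \<Rightarrow> aff" where
  "conj_aff g m = aff_mult (aff_mult g m) (aff_inv g)"

definition NA :: "aff set \<Rightarrow> aff set" where
  "NA M = {g \<in> carrier AffGroup. conj_aff g ` M = M}"

definition orbit_of :: "aff set \<Rightarrow> real^2 \<Rightarrow> (real^2) set" where
  "orbit_of M x = (\<lambda>g. aff_apply g x) ` M"

text \<open>Points of the orbifold E^2/M are the orbits Mx.\<close>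
definition Orb :: "aff set \<Rightarrow> (real^2) set set" where
  "Orb M = range (orbit_of M)"

definition star :: "aff set \<Rightarrow> aff \<Rightarrow> ((real^2) set \<Rightarrow> (real^2) set)" where
  "star M g = (\<lambda>X \<in> Orb M. orbit_of M (aff_apply g (SOME x. x \<in> X)))"

definition Aff :: "aff set \<Rightarrow> ((real^2) set \<Rightarrow> (real^2) set) set" where
  "Aff M = star M ` NA M"

definition AffGrp :: "aff set \<Rightarrow> ((real^2) set \<Rightarrow> (real^2) set) monoid" where
  "AffGrp M = BijGroup (Orb M) \<lparr>carrier := Aff M\<rparr>"

definition orb_dist :: "(real^2) set \<Rightarrow> (real^2) set \<Rightarrow> real" where
  "orb_dist X Y = Inf {dist x y | x y. x \<in> X \<and> y \<in> Y}"

definition Sym :: "aff set \<Rightarrow> ((real^2) set \<Rightarrow> (real^2) set) set" where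
  "Sym M = {\<phi> \<in> Aff M. \<forall>X \<in> Orb M. \<forall>Y \<in> Orb M. orb_dist (\<phi> X) (\<phi> Y) = orb_dist X Y}"

definition SymGrp :: "aff set \<Rightarrow> ((real^2) set \<Rightarrow> (real^2) set) monoid" where
  "SymGrp M = BijGroup (Orb M) \<lparr>carrier := Sym M\<rparr>"

text \<open>Topology of Sym(M): uniform convergence (= compact-open topology) on the compact orbifold.\<close>
definition sym_dist :: "aff set \<Rightarrow> ((real^2) set \<Rightarrow> (real^2) set) \<Rightarrow> ((real^2) set \<Rightarrow> (real^2) set) \<Rightarrow> real" where
  "sym_dist M \<phi> \<psi> = Sup ((\<lambda>X. orb_dist (\<phi> X) (\<psi> X)) ` Orb M)"

definition O2 :: "(real^2^2) monoid" where
  "O2 = \<lparr>carrier = {Q. orthogonal_matrix Q}, mult = (**), one = mat 1\<rparr>"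

definition homeo_Sym_O2 :: "aff set \<Rightarrow> (((real^2) set \<Rightarrow> (real^2) set) \<Rightarrow> (real^2^2)) \<Rightarrow> bool" where
  "homeo_Sym_O2 M f \<longleftrightarrow>
     (\<forall>\<phi> \<in> Sym M. \<forall>e>0. \<exists>d>0. \<forall>\<psi> \<in> Sym M. sym_dist M \<phi> \<psi> < d \<longrightarrow> norm (f \<phi> - f \<psi>) < e) \<and>
     (\<forall>\<phi> \<in> Sym M. \<forall>e>0. \<exists>d>0. \<forall>\<psi> \<in> Sym M. norm (f \<phi> - f \<psi>) < d \<longrightarrow> sym_dist M \<phi> \<psi> < e)"

definition conj_aut :: "aff set \<Rightarrow> aff \<Rightarrow> (aff \<Rightarrow> aff)" where
  "conj_aut M g = (\<lambda>m \<in> M. conj_aff g m)"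

definition Inn :: "aff set \<Rightarrow> (aff \<Rightarrow> aff) set" where
  "Inn M = conj_aut M ` M"

definition Out :: "aff set \<Rightarrow> (aff \<Rightarrow> aff) set monoid" where
  "Out M = AutoGroup (Mgrp M) Mod Inn M"

definition Omega :: "aff set \<Rightarrow> ((real^2) set \<Rightarrow> (real^2) set) \<Rightarrow> (aff \<Rightarrow> aff) set" where
  "Omega M \<phi> = Inn M #>\<^bsub>AutoGroup (Mgrp M)\<^esub>
                 conj_aut M (SOME g. g \<in> NA M \<and> star M g = \<phi>)"

end

theory Submission
  imports Defs
begin


lemma matA_nth [simp]: "matA $ i $ j = (if i = j then 0 else (1::real))"
  unfolding matA_def
  using exhaust_2[of i] exhaust_2[of j] by auto

lemmas mx = vec_eq_iff forall_2 matrix_vector_mult_def matrix_matrix_mult_def sum_2 mat_def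

lemma matAA [simp]: "matA ** matA = mat 1"
  by (simp add: mx)

lemma matA_ne [simp]: "matA \<noteq> mat 1" "mat 1 \<noteq> matA" "matA \<noteq> - mat 1" "- mat 1 \<noteq> matA"
  "matA \<noteq> - matA" "- matA \<noteq> matA" "mat 1 \<noteq> - matA" "- matA \<noteq> mat 1"
  "mat 1 \<noteq> - (mat 1 :: real^2^2)" "- mat 1 \<noteq> (mat 1 :: real^2^2)"
  by (auto simp: mx dest!: spec[of _ 1] spec[of _ 2])

lemma matA_v [simp]: "(matA *v x) $ 1 = x $ 2" "(matA *v x) $ 2 = x $ 1"
  by (simp_all add: mx)

definition Q4 :: "real^2^2 \<Rightarrow> bool" where
  "Q4 B \<longleftrightarrow> B = mat 1 \<or> B = matA \<or> B = - mat 1 \<or> B = - matA"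

lemma Q4_mult: "Q4 B \<Longrightarrow> Q4 C \<Longrightarrow> Q4 (B ** C)"
  unfolding Q4_def
  by (elim disjE; simp add: mx)

lemma aff_mult_pair [simp]: "aff_mult (a, B) (b, C) = (a + B *v b, B ** C)"
  by (simp add: aff_mult_def)

lemma aff_apply_pair [simp]: "aff_apply (a, B) x = a + B *v x"
  by (simp add: aff_apply_def)

lemma minv: assumes "invertible (B::real^2^2)"
  shows "B ** matrix_inv B = mat 1" "matrix_inv B ** B = mat 1"
proof -
  have "\<exists>A'. B ** A' = mat 1 \<and> A' ** B = mat 1" using assms by (simp add: invertible_def)
  then have "B ** matrix_inv B = mat 1 \<and> matrix_inv B ** B = mat 1"
    unfolding matrix_inv_def by (rule someI_ex)
  then show "B ** matrix_inv B = mat 1" "matrix_inv B ** B = mat 1" by auto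
qed

lemma minv_eq: assumes "(B::real^2^2) ** C = mat 1" shows "matrix_inv B = C"
proof -
  have C2: "C ** B = mat 1" using assms matrix_left_right_inverse by blast
  then have iB: "invertible B" unfolding invertible_def using assms by blast
  have "matrix_inv B = matrix_inv B ** (B ** C)" by (simp add: assms matrix_mul_rid)
  also have "\<dots> = (matrix_inv B ** B) ** C" by (simp add: matrix_mul_assoc)
  also have "\<dots> = C" by (simp add: minv(2)[OF iB] matrix_mul_lid)
  finally show ?thesis .
qed

lemma Q4_sq: "Q4 B \<Longrightarrow> B ** B = mat 1"
  unfolding Q4_def by (elim disjE; simp add: mx)

lemma Q4_inv: "Q4 B \<Longrightarrow> matrix_inv B = B"
  by (rule minv_eq) (rule Q4_sq)

lemma Q4_invertible: "Q4 B \<Longrightarrow> invertible B"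
  unfolding invertible_def using Q4_sq by blast

lemma carrier_Aff [simp]: "carrier AffGroup = {g. invertible (snd g)}"
  and mult_Aff [simp]: "mult AffGroup = aff_mult"
  and one_Aff [simp]: "one AffGroup = (0, mat 1)"
  by (simp_all add: AffGroup_def)

lemma group_Aff: "group AffGroup"
proof (rule groupI)
  fix x y assume "x \<in> carrier AffGroup" "y \<in> carrier AffGroup"
  then show "x \<otimes>\<^bsub>AffGroup\<^esub> y \<in> carrier AffGroup"
    by (cases x; cases y) (auto simp: invertible_mult)
next
  show "\<one>\<^bsub>AffGroup\<^esub> \<in> carrier AffGroup" by (simp add: invertible_def matrix_mul_lid)
next
  fix x y z :: aff
  show "x \<otimes>\<^bsub>AffGroup\<^esub> y \<otimes>\<^bsub>AffGroup\<^esub> z = x \<otimes>\<^bsub>AffGroup\<^esub> (y \<otimes>\<^bsub>AffGroup\<^esub> z)"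
    by (cases x; cases y; cases z) (simp add: matrix_vector_mul_assoc matrix_vector_right_distrib matrix_mul_assoc add.assoc)
next
  fix x :: aff show "\<one>\<^bsub>AffGroup\<^esub> \<otimes>\<^bsub>AffGroup\<^esub> x = x"
    by (cases x) (simp add: matrix_mul_lid)
next
  fix x assume x: "x \<in> carrier AffGroup"
  obtain a B where xe: "x = (a, B)" by (cases x)
  have iB: "invertible B" using x xe by simp
  have "aff_inv x \<in> carrier AffGroup" using iB xe unfolding aff_inv_def
    using minv[OF iB] by (auto simp: invertible_def)
  moreover have "aff_inv x \<otimes>\<^bsub>AffGroup\<^esub> x = \<one>\<^bsub>AffGroup\<^esub>"
    using minv[OF iB] xe by (simp add: aff_inv_def)
  ultimately show "\<exists>y\<in>carrier AffGroup. y \<otimes>\<^bsub>AffGroup\<^esub> x = \<one>\<^bsub>AffGroup\<^esub>" by blast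
qed

lemma inv_Aff: assumes "invertible B" shows "inv\<^bsub>AffGroup\<^esub> (a, B) = aff_inv (a, B)"
proof (rule group.inv_equality[OF group_Aff])
  show "aff_inv (a, B) \<otimes>\<^bsub>AffGroup\<^esub> (a, B) = \<one>\<^bsub>AffGroup\<^esub>"
    using minv[OF assms] by (simp add: aff_inv_def)
  show "(a, B) \<in> carrier AffGroup" using assms by simp
  show "aff_inv (a, B) \<in> carrier AffGroup" using minv[OF assms] unfolding aff_inv_def
    by (auto simp: invertible_def)
qed

lemma aff_inv_Q4 [simp]: "Q4 B \<Longrightarrow> aff_inv (a, B) = (- (B *v a), B)"
  by (simp add: aff_inv_def Q4_inv)

lemma Q4_simps [simp]: "Q4 (mat 1)" "Q4 matA" "Q4 (- mat 1)" "Q4 (- matA)"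
  by (simp_all add: Q4_def)

definition Zl :: "(real^2) set" where "Zl = {v. v$1 \<in> \<int> \<and> v$2 \<in> \<int>}"

definition Mex :: "aff set" where
  "Mex = {g. fst g \<in> Zl \<and> (snd g = mat 1 \<or> snd g = matA)}"

lemma Zl_add: "u \<in> Zl \<Longrightarrow> v \<in> Zl \<Longrightarrow> u + v \<in> Zl"
  by (simp add: Zl_def)
lemma Zl_neg: "u \<in> Zl \<Longrightarrow> - u \<in> Zl"
  by (simp add: Zl_def)
lemma Zl_diff: "u \<in> Zl \<Longrightarrow> v \<in> Zl \<Longrightarrow> u - v \<in> Zl"
  by (simp add: Zl_def)
lemma Zl_Q4: "Q4 B \<Longrightarrow> u \<in> Zl \<Longrightarrow> B *v u \<in> Zl"
  unfolding Q4_def Zl_def by (elim disjE) (simp_all add: mx)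
lemma Zl_0 [simp]: "0 \<in> Zl" by (simp add: Zl_def)

lemma Mex_mult: "g \<in> Mex \<Longrightarrow> h \<in> Mex \<Longrightarrow> aff_mult g h \<in> Mex"
  by (cases g; cases h) (auto simp: Mex_def Zl_add Zl_Q4 matrix_mul_lid matrix_mul_rid)

lemma Mcm_sub: "Mcm \<subseteq> Mex"
proof
  fix g assume "g \<in> Mcm"
  then show "g \<in> Mex" unfolding Mcm_def
  proof (induction rule: generate.induct)
    case one then show ?case by (simp add: Mex_def)
  next
    case (incl h) then show ?case by (auto simp: Mex_def Zl_def axis_def)
  next
    case (inv h) 
    then have "h = (axis 1 1, mat 1) \<or> h = (axis 2 1, mat 1) \<or> h = (0, matA)" by auto
    then show ?case
      by (elim disjE) (simp_all add: inv_Aff Q4_invertible; simp add: Mex_def Zl_def axis_def mx)+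
  next
    case (eng h1 h2)
    then show ?case using Mex_mult by simp
  qed
qed

lemma Mcm_one: "(0, mat 1) \<in> Mcm"
  unfolding Mcm_def using generate.one[of AffGroup] by simp

lemma Mcm_mult: "g \<in> Mcm \<Longrightarrow> h \<in> Mcm \<Longrightarrow> aff_mult g h \<in> Mcm"
  unfolding Mcm_def using generate.eng[of _ AffGroup] by simp

lemma Mcm_gens: "(axis 1 1, mat 1) \<in> Mcm" "(axis 2 1, mat 1) \<in> Mcm" "(0, matA) \<in> Mcm"
  unfolding Mcm_def by (auto intro: generate.incl)

lemma Mcm_gens_inv: "(- axis 1 1, mat 1) \<in> Mcm" "(- axis 2 1, mat 1) \<in> Mcm"
proof -
  have "inv\<^bsub>AffGroup\<^esub> (axis 1 1, mat 1) \<in> Mcm" "inv\<^bsub>AffGroup\<^esub> (axis 2 1, mat 1) \<in> Mcm"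
    unfolding Mcm_def by (auto intro: generate.inv)
  then show "(- axis 1 1, mat 1) \<in> Mcm" "(- axis 2 1, mat 1) \<in> Mcm"
    by (simp_all add: inv_Aff Q4_invertible matrix_vector_mul_lid)
qed

lemma vec2_eq: "(v::real^2) = vector [v$1, v$2]"
  by (simp add: mx vector_2)

lemma Mcm_lat: "(vector [of_int i, of_int j], mat 1) \<in> Mcm"
proof -
  have b0: "(vector [0, of_int j], mat 1) \<in> Mcm" for j
  proof (induction j rule: int_induct[where k=0])
    case base
    have "vector [0, 0] = (0::real^2)" by (simp add: vec_eq_iff forall_2 vector_2)
    then show ?case using Mcm_one by simp
  next
    case (step1 i)
    from Mcm_mult[OF step1(2) Mcm_gens(2)] have "(vector [0, of_int i] + axis 2 1, mat 1) \<in> Mcm"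
      by (simp add: matrix_mul_lid matrix_vector_mul_lid)
    moreover have "vector [0, of_int i] + axis 2 1 = (vector [0, of_int (i+1)] :: real^2)"
      by (simp add: vec_eq_iff forall_2 vector_2 axis_def)
    ultimately show ?case by simp
  next
    case (step2 i)
    from Mcm_mult[OF step2(2) Mcm_gens_inv(2)] have "(vector [0, of_int i] + - axis 2 1, mat 1) \<in> Mcm"
      by (simp add: matrix_mul_lid matrix_vector_mul_lid)
    moreover have "vector [0, of_int i] + - axis 2 1 = (vector [0, of_int (i-1)] :: real^2)"
      by (simp add: vec_eq_iff forall_2 vector_2 axis_def)
    ultimately show ?case by simp
  qed
  show ?thesis
  proof (induction i rule: int_induct[where k=0])
    case base then show ?case using b0 by simp
  next
    case (step1 i)
    from Mcm_mult[OF step1(2) Mcm_gens(1)] have "(vector [of_int i, of_int j] + axis 1 1, mat 1) \<in> Mcm"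
      by (simp add: matrix_mul_lid matrix_vector_mul_lid)
    moreover have "vector [of_int i, of_int j] + axis 1 1 = (vector [of_int (i+1), of_int j] :: real^2)"
      by (simp add: vec_eq_iff forall_2 vector_2 axis_def)
    ultimately show ?case by simp
  next
    case (step2 i)
    from Mcm_mult[OF step2(2) Mcm_gens_inv(1)] have "(vector [of_int i, of_int j] + - axis 1 1, mat 1) \<in> Mcm"
      by (simp add: matrix_mul_lid matrix_vector_mul_lid)
    moreover have "vector [of_int i, of_int j] + - axis 1 1 = (vector [of_int (i-1), of_int j] :: real^2)"
      by (simp add: vec_eq_iff forall_2 vector_2 axis_def)
    ultimately show ?case by simp
  qed
qed

lemma Mcm_eq: "Mcm = Mex"
proof
  show "Mcm \<subseteq> Mex" by (rule Mcm_sub)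
  show "Mex \<subseteq> Mcm"
  proof
    fix g assume g: "g \<in> Mex"
    obtain v B where ge: "g = (v, B)" by (cases g)
    from g ge have v: "v \<in> Zl" and B: "B = mat 1 \<or> B = matA" by (auto simp: Mex_def)
    obtain i j where ij: "v$1 = of_int i" "v$2 = of_int j" using v unfolding Zl_def
      by (auto elim!: Ints_cases)
    have vm: "(v, mat 1) \<in> Mcm" using Mcm_lat[of i j] ij vec2_eq[of v] by simp
    show "g \<in> Mcm"
    proof (cases "B = mat 1")
      case True then show ?thesis using vm ge by simp
    next
      case False then have "B = matA" using B by simp
      then show ?thesis using Mcm_mult[OF vm Mcm_gens(3)] ge by (simp add: matrix_mul_lid)
    qed
  qed
qed


definition NAex :: "aff set" where
  "NAex = {g. Q4 (snd g) \<and> (fst g)$1 - (fst g)$2 \<in> \<int>}"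

lemma mvneg: "(A::real^2^2) *v (- x) = - (A *v x)"
  by (simp add: matrix_vector_mult_def vec_eq_iff sum_negf)

lemma conj_gen: assumes "invertible B"
  shows "conj_aff (a, B) (n, C) = (a + B *v n - (B ** C ** matrix_inv B) *v a, B ** C ** matrix_inv B)"
  by (simp add: conj_aff_def aff_inv_def matrix_vector_mul_assoc[symmetric] matrix_vector_right_distrib
      mvneg matrix_mul_assoc)

lemma Q4_comm: "Q4 B \<Longrightarrow> C = mat 1 \<or> C = matA \<Longrightarrow> B ** C ** B = C"
  unfolding Q4_def by (elim disjE; simp add: mx)

lemma conj_Q4: assumes "Q4 B" "C = mat 1 \<or> C = matA"
  shows "conj_aff (a, B) (n, C) = (a - C *v a + B *v n, C)"
  using conj_gen[OF Q4_invertible[OF assms(1)]] Q4_inv[OF assms(1)] Q4_comm[OF assms] by simp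

lemma Zl_I_A: "a$1 - a$2 \<in> \<int> \<Longrightarrow> C = mat 1 \<or> C = matA \<Longrightarrow> a - C *v a \<in> Zl"
proof (elim disjE)
  assume a: "a$1 - a$2 \<in> \<int>" and "C = matA"
  moreover have "a$2 - a$1 = - (a$1 - a$2)" by simp
  ultimately show ?thesis using Ints_minus[OF a] by (simp add: Zl_def)
qed (simp add: matrix_vector_mul_lid)

lemma NAex_sub: "NAex \<subseteq> NA Mcm"
proof
  fix g assume g: "g \<in> NAex"
  obtain a B where ge: "g = (a, B)" by (cases g)
  have B: "Q4 B" and a: "a$1 - a$2 \<in> \<int>" using g ge by (auto simp: NAex_def)
  have "conj_aff g ` Mex = Mex"
  proof
    show "conj_aff g ` Mex \<subseteq> Mex"
    proof
      fix y assume "y \<in> conj_aff g ` Mex"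
      then obtain n C where nC: "(n, C) \<in> Mex" "y = conj_aff g (n, C)" by auto
      have C: "C = mat 1 \<or> C = matA" and n: "n \<in> Zl" using nC by (auto simp: Mex_def)
      show "y \<in> Mex" using nC(2) ge conj_Q4[OF B C] Zl_I_A[OF a C] Zl_Q4[OF B n] C
        by (simp add: Mex_def Zl_add)
    qed
  next
    show "Mex \<subseteq> conj_aff g ` Mex"
    proof
      fix y assume y: "y \<in> Mex"
      obtain n C where ye: "y = (n, C)" by (cases y)
      have C: "C = mat 1 \<or> C = matA" and n: "n \<in> Zl" using y ye by (auto simp: Mex_def)
      define n' where "n' = B *v (n - (a - C *v a))"
      have n': "n' \<in> Zl" unfolding n'_def using Zl_Q4[OF B] Zl_diff[OF n Zl_I_A[OF a C]] by blast
      have "B *v n' = n - (a - C *v a)" unfolding n'_def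
        using Q4_sq[OF B] by (simp add: matrix_vector_mul_assoc matrix_vector_mul_lid)
      then have "conj_aff g (n', C) = y" using conj_Q4[OF B C] ge ye by simp
      moreover have "(n', C) \<in> Mex" using n' C by (simp add: Mex_def)
      ultimately show "y \<in> conj_aff g ` Mex" by force
    qed
  qed
  then show "g \<in> NA Mcm" using Q4_invertible[OF B] ge by (simp add: NA_def Mcm_eq)
qed

lemma int_lemma:
  fixes p q n1 n2 :: int
  assumes "p * n1 + q * n2 = 1" "q * n1 + p * n2 = 0"
  shows "(p = 1 \<and> q = 0) \<or> (p = -1 \<and> q = 0) \<or> (p = 0 \<and> q = 1) \<or> (p = 0 \<and> q = -1)"
proof -
  have e1: "(p + q) * (n1 + n2) = 1" using assms by (simp add: algebra_simps)
  have e2: "(p - q) * (n1 - n2) = 1" using assms by (simp add: algebra_simps)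
  have "p + q = 1 \<or> p + q = -1" using zmult_eq_1_iff[of "p+q" "n1+n2"] e1 by auto
  moreover have "p - q = 1 \<or> p - q = -1" using zmult_eq_1_iff[of "p-q" "n1-n2"] e2 by auto
  ultimately show ?thesis by auto
qed

lemma real_int_lemma:
  fixes p q n1 n2 :: real
  assumes "p \<in> \<int>" "q \<in> \<int>" "n1 \<in> \<int>" "n2 \<in> \<int>"
    "p * n1 + q * n2 = 1" "q * n1 + p * n2 = 0"
  shows "(p = 1 \<and> q = 0) \<or> (p = -1 \<and> q = 0) \<or> (p = 0 \<and> q = 1) \<or> (p = 0 \<and> q = -1)"
proof -
  obtain p' q' m1 m2 where e: "p = of_int p'" "q = of_int q'" "n1 = of_int m1" "n2 = of_int m2"
    using assms(1-4) by (auto elim!: Ints_cases)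
  have "p' * m1 + q' * m2 = 1" "q' * m1 + p' * m2 = 0"
    using assms(5,6) unfolding e by (simp_all flip: of_int_mult of_int_add)
  from int_lemma[OF this] show ?thesis unfolding e by auto
qed

lemma NA_sub: "NA Mcm \<subseteq> NAex"
proof
  fix g assume g: "g \<in> NA Mcm"
  obtain a B where ge: "g = (a, B)" by (cases g)
  have iB: "invertible B" using g ge by (simp add: NA_def)
  define Bi where "Bi = matrix_inv B"
  have BBi: "B ** Bi = mat 1" "Bi ** B = mat 1" using minv[OF iB] by (simp_all add: Bi_def)
  have img: "conj_aff g ` Mex = Mex" using g by (simp add: NA_def Mcm_eq)
  have cg: "conj_aff g (n, C) = (a + B *v n - (B ** C ** Bi) *v a, B ** C ** Bi)" for n C
    using conj_gen[OF iB] ge by (simp add: Bi_def)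
  have BIBi: "B ** mat 1 ** Bi = mat 1" using BBi by (simp add: matrix_mul_rid)
  have "conj_aff g (0, matA) \<in> Mex" using img by (auto simp: Mex_def)
  then have BABi: "B ** matA ** Bi = mat 1 \<or> B ** matA ** Bi = matA"
    and aA: "a - (B ** matA ** Bi) *v a \<in> Zl" using cg[of 0 matA] by (auto simp: Mex_def)
  have BABi_ne: "B ** matA ** Bi \<noteq> mat 1"
  proof
    assume "B ** matA ** Bi = mat 1"
    then have "Bi ** (B ** matA ** Bi) ** B = Bi ** B" by (simp add: matrix_mul_rid)
    moreover have "Bi ** (B ** matA ** Bi) ** B = matA" by (metis BBi matrix_mul_assoc matrix_mul_lid matrix_mul_rid)
    ultimately have "matA = mat 1" using BBi by simp
    then show False by simp
  qed
  with BABi have BA: "B ** matA ** Bi = matA" by simp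
  then have BAc: "B ** matA = matA ** B"
    by (metis BBi(2) matrix_mul_assoc matrix_mul_rid)
  have a1: "a$1 - a$2 \<in> \<int>" using aA BA by (simp add: Zl_def)
  have Bsym: "B$1$1 = B$2$2" "B$1$2 = B$2$1"
  proof -
    have "(B ** matA)$1$2 = (matA ** B)$1$2" "(B ** matA)$1$1 = (matA ** B)$1$1" using BAc by simp_all
    then show "B$1$1 = B$2$2" "B$1$2 = B$2$1" by (simp_all add: matrix_matrix_mult_def sum_2)
  qed
  have "conj_aff g (axis 1 1, mat 1) \<in> Mex" using img by (auto simp: Mex_def Zl_def axis_def)
  then have "B *v axis 1 1 \<in> Zl" using cg[of "axis 1 1" "mat 1"] BIBi by (simp add: Mex_def matrix_vector_mul_lid)
  then have pq: "B$1$1 \<in> \<int>" "B$2$1 \<in> \<int>" by (simp_all add: Zl_def mx axis_def)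
  have "(axis 1 1, mat 1) \<in> conj_aff g ` Mex" using img by (auto simp: Mex_def Zl_def axis_def)
  then obtain n C where nC: "(n, C) \<in> Mex" "conj_aff g (n, C) = (axis 1 1, mat 1)" by auto
  have C: "C = mat 1 \<or> C = matA" and n: "n \<in> Zl" using nC by (auto simp: Mex_def)
  have "C = mat 1" using nC(2) cg[of n C] C BA by auto
  then have "conj_aff g (n, mat 1) = (axis 1 1, mat 1)" using nC(2) by simp
  then have "B *v n = axis 1 1" using cg[of n "mat 1"] BBi by (simp add: matrix_mul_rid matrix_vector_mul_lid)
  then have "(B *v n)$1 = 1" "(B *v n)$2 = 0" by (simp_all add: axis_def)
  then have eqs: "B$1$1 * n$1 + B$2$1 * n$2 = 1" "B$2$1 * n$1 + B$1$1 * n$2 = 0"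
    using Bsym by (simp_all add: matrix_vector_mult_def sum_2)
  have "(B$1$1 = 1 \<and> B$2$1 = 0) \<or> (B$1$1 = -1 \<and> B$2$1 = 0) \<or> (B$1$1 = 0 \<and> B$2$1 = 1) \<or> (B$1$1 = 0 \<and> B$2$1 = -1)"
    using real_int_lemma[OF pq _ _ eqs] n by (simp add: Zl_def)
  then have "Q4 B" unfolding Q4_def using Bsym
    by (elim disjE) (simp_all add: vec_eq_iff forall_2 mat_def)
  then show "g \<in> NAex" using a1 ge by (simp add: NAex_def)
qed

lemma NA_eq: "NA Mcm = NAex"
  using NA_sub NAex_sub by blast


lemma mm_neg [simp]: "(- A) ** (B::real^2^2) = - (A ** B)" "A ** (- B) = - (A ** B)"
  by (simp_all add: vec_eq_iff matrix_matrix_mult_def sum_negf)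

lemma mv_neg [simp]: "(- A) *v (x::real^2) = - (A *v x)"
  by (simp add: vec_eq_iff matrix_vector_mult_def sum_negf)

lemma Ints_swap: "(x::real) - y \<in> \<int> \<Longrightarrow> y - x \<in> \<int>"
  by (metis Ints_minus minus_diff_eq)

lemma Q4_diff: assumes "Q4 B" "x$1 - x$2 \<in> \<int>" shows "(B *v x)$1 - (B *v x)$2 \<in> \<int>"
proof -
  have s: "x$2 - x$1 \<in> \<int>" using assms(2) by (rule Ints_swap)
  show ?thesis using assms(1) unfolding Q4_def
  proof (elim disjE)
    assume "B = mat 1" then show ?thesis using assms(2) by (simp add: matrix_vector_mul_lid)
  next
    assume "B = matA" then show ?thesis using s by simp
  next
    assume "B = - mat 1" then show ?thesis using s by (simp add: matrix_vector_mul_lid)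
  next
    assume "B = - matA" then show ?thesis using assms(2) by simp
  qed
qed

definition pos :: "real^2^2 \<Rightarrow> bool" where "pos B \<longleftrightarrow> B = mat 1 \<or> B = matA"

lemma Q4_cases: "Q4 B \<Longrightarrow> (B = mat 1 \<Longrightarrow> P) \<Longrightarrow> (B = matA \<Longrightarrow> P) \<Longrightarrow> (B = - mat 1 \<Longrightarrow> P) \<Longrightarrow> (B = - matA \<Longrightarrow> P) \<Longrightarrow> P"
  unfolding Q4_def by blast

lemma pos_simps [simp]: "pos (mat 1)" "pos matA" "\<not> pos (- mat 1)" "\<not> pos (- matA)"
  by (simp_all add: pos_def)

lemma pos_mult: "Q4 B \<Longrightarrow> Q4 C \<Longrightarrow> pos (B ** C) \<longleftrightarrow> (pos B \<longleftrightarrow> pos C)"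
  by (erule Q4_cases; erule Q4_cases) (simp_all add: matrix_mul_lid matrix_mul_rid)

lemma pos_Q4: "pos B \<Longrightarrow> Q4 B"
  by (auto simp: pos_def)

lemma aff_apply_mult: "aff_apply (aff_mult g h) x = aff_apply g (aff_apply h x)"
  by (cases g; cases h) (simp add: matrix_vector_mul_assoc matrix_vector_right_distrib add.assoc)

lemma aff_inv_apply: "invertible (snd g) \<Longrightarrow> aff_apply (aff_inv g) (aff_apply g x) = x"
  by (cases g) (simp add: aff_inv_def minv matrix_vector_right_distrib mvneg matrix_vector_mul_assoc
      matrix_vector_mul_lid)

lemma Mex_inv: "m \<in> Mex \<Longrightarrow> aff_inv m \<in> Mex"
  by (cases m) (auto simp: Mex_def pos_def Zl_neg Zl_Q4 intro: Zl_neg Zl_Q4)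

lemma Mex_invertible: "m \<in> Mex \<Longrightarrow> invertible (snd m)"
  by (auto simp: Mex_def intro: Q4_invertible)

lemma orbit_mem: "y \<in> orbit_of Mcm x \<longleftrightarrow> (\<exists>m\<in>Mex. y = aff_apply m x)"
  by (auto simp: orbit_of_def Mcm_eq)

lemma orbit_self: "x \<in> orbit_of Mcm x"
  unfolding orbit_mem by (rule bexI[of _ "(0, mat 1)"]) (auto simp: Mex_def matrix_vector_mul_lid)

lemma orbit_trans: "y \<in> orbit_of Mcm x \<Longrightarrow> z \<in> orbit_of Mcm y \<Longrightarrow> z \<in> orbit_of Mcm x"
  unfolding orbit_mem by (metis aff_apply_mult Mex_mult)

lemma orbit_sym: "y \<in> orbit_of Mcm x \<Longrightarrow> x \<in> orbit_of Mcm y"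
  unfolding orbit_mem by (metis aff_inv_apply Mex_inv Mex_invertible)

lemma orbit_eq: "y \<in> orbit_of Mcm x \<Longrightarrow> orbit_of Mcm y = orbit_of Mcm x"
  using orbit_trans orbit_sym by blast

lemma orbit_eq_iff: "orbit_of Mcm y = orbit_of Mcm x \<longleftrightarrow> y \<in> orbit_of Mcm x"
  using orbit_eq orbit_self by metis

lemma NAex_invertible: "g \<in> NAex \<Longrightarrow> invertible (snd g)"
  by (auto simp: NAex_def intro: Q4_invertible)

lemma conj_apply: "invertible (snd g) \<Longrightarrow>
    aff_apply (conj_aff g m) (aff_apply g x) = aff_apply g (aff_apply m x)"
  by (simp add: conj_aff_def aff_apply_mult aff_inv_apply)

lemma conj_in: "g \<in> NAex \<Longrightarrow> m \<in> Mex \<Longrightarrow> conj_aff g m \<in> Mex"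
  using NA_eq by (auto simp: NA_def Mcm_eq)

lemma orbit_NA: assumes "g \<in> NAex" "y \<in> orbit_of Mcm x"
  shows "orbit_of Mcm (aff_apply g y) = orbit_of Mcm (aff_apply g x)"
proof -
  obtain m where m: "m \<in> Mex" "y = aff_apply m x" using assms(2) orbit_mem by blast
  have "aff_apply g y = aff_apply (conj_aff g m) (aff_apply g x)"
    using conj_apply[OF NAex_invertible[OF assms(1)]] m by simp
  then have "aff_apply g y \<in> orbit_of Mcm (aff_apply g x)"
    using conj_in[OF assms(1) m(1)] orbit_mem by blast
  then show ?thesis by (rule orbit_eq)
qed

lemma Orb_I [simp]: "orbit_of Mcm x \<in> Orb Mcm"
  by (simp add: Orb_def)

lemma Orb_E: "X \<in> Orb Mcm \<Longrightarrow> (\<And>x. X = orbit_of Mcm x \<Longrightarrow> P) \<Longrightarrow> P"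
  by (auto simp: Orb_def)

lemma star_orbit: assumes "g \<in> NAex"
  shows "star Mcm g (orbit_of Mcm x) = orbit_of Mcm (aff_apply g x)"
proof -
  have "(SOME y. y \<in> orbit_of Mcm x) \<in> orbit_of Mcm x" using orbit_self by (rule someI)
  then show ?thesis using orbit_NA[OF assms] by (simp add: star_def)
qed

lemma star_in_Orb: "g \<in> NAex \<Longrightarrow> X \<in> Orb Mcm \<Longrightarrow> star Mcm g X \<in> Orb Mcm"
  by (erule Orb_E) (simp add: star_orbit)

lemma star_ext: "star Mcm g \<in> extensional (Orb Mcm)"
  by (simp add: star_def)

lemma NAex_mult: "g \<in> NAex \<Longrightarrow> h \<in> NAex \<Longrightarrow> aff_mult g h \<in> NAex"
proof -
  assume g: "g \<in> NAex" and h: "h \<in> NAex"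
  obtain a B b C where e: "g = (a, B)" "h = (b, C)" by (cases g; cases h)
  have B: "Q4 B" "a$1 - a$2 \<in> \<int>" and C: "Q4 C" "b$1 - b$2 \<in> \<int>" using g h e by (auto simp: NAex_def)
  have "(a + B *v b)$1 - (a + B *v b)$2 = (a$1 - a$2) + ((B *v b)$1 - (B *v b)$2)" by simp
  then have "(a + B *v b)$1 - (a + B *v b)$2 \<in> \<int>" using Q4_diff[OF B(1) C(2)] B(2) by (metis Ints_add)
  then show ?thesis using e Q4_mult[OF B(1) C(1)] by (simp add: NAex_def)
qed

lemma star_mult: assumes "g \<in> NAex" "h \<in> NAex"
  shows "compose (Orb Mcm) (star Mcm g) (star Mcm h) = star Mcm (aff_mult g h)"
proof (rule ext)
  fix X show "compose (Orb Mcm) (star Mcm g) (star Mcm h) X = star Mcm (aff_mult g h) X"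
  proof (cases "X \<in> Orb Mcm")
    case True
    then obtain x where X: "X = orbit_of Mcm x" by (rule Orb_E)
    show ?thesis using assms NAex_mult[OF assms]
      by (simp add: X compose_def star_orbit aff_apply_mult)
  next
    case False then show ?thesis by (simp add: compose_def star_def)
  qed
qed

lemma NAex_one: "(0, mat 1) \<in> NAex" by (simp add: NAex_def)

lemma star_one: "star Mcm (0, mat 1) = (\<lambda>X\<in>Orb Mcm. X)"
proof (rule ext)
  fix X show "star Mcm (0, mat 1) X = (\<lambda>X\<in>Orb Mcm. X) X"
  proof (cases "X \<in> Orb Mcm")
    case True
    then obtain x where X: "X = orbit_of Mcm x" by (rule Orb_E)
    show ?thesis using True NAex_one by (simp add: X star_orbit matrix_vector_mul_lid)
  next
    case False then show ?thesis by (simp add: star_def)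
  qed
qed

lemma NAex_inv: "g \<in> NAex \<Longrightarrow> aff_inv g \<in> NAex \<and> aff_mult g (aff_inv g) = (0, mat 1) \<and> aff_mult (aff_inv g) g = (0, mat 1)"
proof -
  assume g: "g \<in> NAex"
  obtain a B where e: "g = (a, B)" by (cases g)
  have B: "Q4 B" "a$1 - a$2 \<in> \<int>" using g e by (auto simp: NAex_def)
  have i: "aff_inv g = (- (B *v a), B)" using e B by simp
  have "(- (B *v a))$1 - (- (B *v a))$2 = - ((B *v a)$1 - (B *v a)$2)" by simp
  then have "(- (B *v a))$1 - (- (B *v a))$2 \<in> \<int>" using Q4_diff[OF B] by (metis Ints_minus)
  then show ?thesis using i B e Q4_sq[OF B(1)]
    by (simp add: NAex_def matrix_vector_mul_assoc matrix_vector_mul_lid mvneg)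
qed

lemma star_Bij: "g \<in> NAex \<Longrightarrow> star Mcm g \<in> Bij (Orb Mcm)"
proof -
  assume g: "g \<in> NAex"
  note gi = NAex_inv[OF g]
  have c1: "compose (Orb Mcm) (star Mcm g) (star Mcm (aff_inv g)) = (\<lambda>X\<in>Orb Mcm. X)"
    using star_mult[OF g conjunct1[OF gi]] gi star_one by simp
  have c2: "compose (Orb Mcm) (star Mcm (aff_inv g)) (star Mcm g) = (\<lambda>X\<in>Orb Mcm. X)"
    using star_mult[OF conjunct1[OF gi] g] gi star_one by simp
  have "bij_betw (star Mcm g) (Orb Mcm) (Orb Mcm)"
  proof (rule bij_betwI[where g = "star Mcm (aff_inv g)"])
    show "star Mcm g \<in> Orb Mcm \<rightarrow> Orb Mcm" using star_in_Orb[OF g] by blast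
    show "star Mcm (aff_inv g) \<in> Orb Mcm \<rightarrow> Orb Mcm" using star_in_Orb gi by blast
    show "star Mcm (aff_inv g) (star Mcm g X) = X" if "X \<in> Orb Mcm" for X
      using fun_cong[OF c2, of X] that by (simp add: compose_def)
    show "star Mcm g (star Mcm (aff_inv g) X) = X" if "X \<in> Orb Mcm" for X
      using fun_cong[OF c1, of X] that by (simp add: compose_def)
  qed
  then show ?thesis by (simp add: Bij_def star_ext)
qed


lemma Mex_NAex: "m \<in> Mex \<Longrightarrow> m \<in> NAex"
  by (cases m) (auto simp: Mex_def NAex_def Zl_def intro: pos_Q4)

lemma star_eq_suff:
  assumes g: "(a, B) \<in> NAex" and h: "(b, C) \<in> NAex" and p: "pos B \<longleftrightarrow> pos C"
    and k: "a$1 - b$1 \<in> \<int>"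
  shows "star Mcm (a, B) = star Mcm (b, C)"
proof -
  have B: "Q4 B" "a$1 - a$2 \<in> \<int>" and C: "Q4 C" "b$1 - b$2 \<in> \<int>" using g h by (auto simp: NAex_def)
  have e2: "(b - a)$2 = (b$2 - b$1) + (b$1 - a$1) + (a$1 - a$2)" by simp
  have "(b - a)$2 \<in> \<int>" unfolding e2 using Ints_swap[OF C(2)] Ints_swap[OF k] B(2) by (intro Ints_add)
  moreover have "(b - a)$1 \<in> \<int>" using Ints_swap[OF k] by simp
  ultimately have "b - a \<in> Zl" by (simp add: Zl_def)
  then have m: "(B *v (b - a), B ** C) \<in> Mex"
    using Zl_Q4[OF B(1)] pos_mult[OF B(1) C(1)] p by (simp add: Mex_def pos_def)
  have hm: "aff_mult (a, B) (B *v (b - a), B ** C) = (b, C)"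
  proof -
    have "B ** (B ** C) = C" by (metis Q4_sq[OF B(1)] matrix_mul_assoc matrix_mul_lid)
    then show ?thesis using Q4_sq[OF B(1)] by (simp add: matrix_vector_mul_assoc matrix_vector_mul_lid)
  qed
  show ?thesis
  proof (rule ext)
    fix X show "star Mcm (a, B) X = star Mcm (b, C) X"
    proof (cases "X \<in> Orb Mcm")
      case True
      then obtain x where X: "X = orbit_of Mcm x" by (rule Orb_E)
      have "aff_apply (B *v (b - a), B ** C) x \<in> orbit_of Mcm x" using m orbit_mem by blast
      then have "orbit_of Mcm (aff_apply (a,B) (aff_apply (B *v (b - a), B ** C) x)) = orbit_of Mcm (aff_apply (a,B) x)"
        using orbit_NA[OF g] by blast
      moreover have "aff_apply (b, C) x = aff_apply (a,B) (aff_apply (B *v (b - a), B ** C) x)"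
        by (metis hm aff_apply_mult)
      ultimately show ?thesis using g h by (simp add: X star_orbit)
    next
      case False then show ?thesis by (simp add: star_def)
    qed
  qed
qed

lemma half_not_int: "(1/2::real) \<notin> \<int>"
proof
  assume "(1/2::real) \<in> \<int>"
  then obtain k where "(1/2::real) = of_int k" by (auto elim: Ints_cases)
  then have "(1::real) = of_int (2 * k)" by simp
  then have "1 = 2 * k" by linarith
  then show False by presburger
qed

definition sg :: "real^2^2 \<Rightarrow> real" where "sg B = (if pos B then 1 else -1)"

lemma Q4_diag: "Q4 B \<Longrightarrow> (B *v vector [t, t])$1 = sg B * t \<and> (B *v vector [t, t])$2 = sg B * t"
  unfolding Q4_def by (elim disjE; hypsubst; simp add: sg_def; simp add: mx vector_2)

lemma orbit_first: assumes "p \<in> orbit_of Mcm y" "y$1 - y$2 \<in> \<int>" shows "p$1 - y$1 \<in> \<int>"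
proof -
  obtain n D where m: "(n, D) \<in> Mex" "p = n + D *v y" using assms(1) orbit_mem by force
  have n: "n$1 \<in> \<int>" "D = mat 1 \<or> D = matA" using m(1) by (auto simp: Mex_def Zl_def)
  from n(2) show ?thesis
  proof
    assume "D = mat 1" then show ?thesis using m n by (simp add: matrix_vector_mul_lid)
  next
    assume "D = matA"
    then have "p$1 - y$1 = n$1 + (y$2 - y$1)" using m by simp
    then show ?thesis using n Ints_swap[OF assms(2)] by (metis Ints_add)
  qed
qed

lemma star_eq_nec:
  assumes g: "(a, B) \<in> NAex" and h: "(b, C) \<in> NAex" and e: "star Mcm (a, B) = star Mcm (b, C)"
  shows "(pos B \<longleftrightarrow> pos C) \<and> a$1 - b$1 \<in> \<int>"
proof -
  have B: "Q4 B" "a$1 - a$2 \<in> \<int>" and C: "Q4 C" "b$1 - b$2 \<in> \<int>" using g h by (auto simp: NAex_def)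
  have key: "b$1 + sg C * t - (a$1 + sg B * t) \<in> \<int>" for t
  proof -
    let ?x = "vector [t, t] :: real^2"
    have "orbit_of Mcm (aff_apply (a, B) ?x) = orbit_of Mcm (aff_apply (b, C) ?x)"
      using fun_cong[OF e, of "orbit_of Mcm ?x"] g h by (simp add: star_orbit)
    then have "aff_apply (b, C) ?x \<in> orbit_of Mcm (aff_apply (a, B) ?x)"
      by (metis orbit_self)
    moreover have "(aff_apply (a, B) ?x)$1 - (aff_apply (a, B) ?x)$2 \<in> \<int>"
      using Q4_diag[OF B(1), of t] B(2) by simp
    ultimately have "(aff_apply (b, C) ?x)$1 - (aff_apply (a, B) ?x)$1 \<in> \<int>"
      by (rule orbit_first)
    then show ?thesis using Q4_diag[OF B(1), of t] Q4_diag[OF C(1), of t] by simp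
  qed
  have k0: "b$1 - a$1 \<in> \<int>" using key[of 0] by simp
  have p: "pos B \<longleftrightarrow> pos C"
  proof (rule ccontr)
    assume np: "\<not> (pos B \<longleftrightarrow> pos C)"
    have "b$1 + sg C * (1/4) - (a$1 + sg B * (1/4)) - (b$1 - a$1) \<in> \<int>"
      using key[of "1/4"] k0 by (rule Ints_diff)
    moreover have "b$1 + sg C * (1/4) - (a$1 + sg B * (1/4)) - (b$1 - a$1) = 1/2 \<or>
        b$1 + sg C * (1/4) - (a$1 + sg B * (1/4)) - (b$1 - a$1) = - (1/2)"
      using np by (auto simp: sg_def)
    ultimately show False using half_not_int Ints_minus by (metis minus_minus)
  qed
  show ?thesis using p Ints_swap[OF k0] by simp
qed

lemma star_eq_iff:
  assumes g: "(a, B) \<in> NAex" and h: "(b, C) \<in> NAex"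
  shows "star Mcm (a, B) = star Mcm (b, C) \<longleftrightarrow> (pos B \<longleftrightarrow> pos C) \<and> a$1 - b$1 \<in> \<int>"
  using star_eq_nec[OF g h] star_eq_suff[OF g h] by blast


lemma norm2: "norm (x::real^2) = sqrt ((x$1)^2 + (x$2)^2)"
  by (simp add: norm_vec_def L2_set_def sum_2)

lemma Q4_norm: "Q4 B \<Longrightarrow> norm (B *v v) = norm (v::real^2)"
  unfolding Q4_def by (elim disjE; hypsubst; simp add: norm2 matrix_vector_mul_lid add.commute)

lemma aff_inv_cancel: assumes "g \<in> NAex"
  shows "aff_apply g (aff_apply (aff_inv g) q) = q" "aff_apply (aff_inv g) (aff_apply g q) = q"
proof -
  note i = NAex_inv[OF assms]
  show "aff_apply g (aff_apply (aff_inv g) q) = q"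
    by (metis aff_apply_mult i aff_apply_pair add_0 matrix_vector_mul_lid)
  show "aff_apply (aff_inv g) (aff_apply g q) = q"
    by (metis aff_apply_mult i aff_apply_pair add_0 matrix_vector_mul_lid)
qed

lemma orbit_image: assumes g: "g \<in> NAex"
  shows "orbit_of Mcm (aff_apply g x) = aff_apply g ` orbit_of Mcm x"
proof
  show "aff_apply g ` orbit_of Mcm x \<subseteq> orbit_of Mcm (aff_apply g x)"
  proof
    fix q assume "q \<in> aff_apply g ` orbit_of Mcm x"
    then obtain p where p: "p \<in> orbit_of Mcm x" "q = aff_apply g p" by blast
    have "orbit_of Mcm (aff_apply g p) = orbit_of Mcm (aff_apply g x)" using orbit_NA[OF g p(1)] .
    moreover have "aff_apply g p \<in> orbit_of Mcm (aff_apply g p)" by (rule orbit_self)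
    ultimately show "q \<in> orbit_of Mcm (aff_apply g x)" using p(2) by simp
  qed
next
  show "orbit_of Mcm (aff_apply g x) \<subseteq> aff_apply g ` orbit_of Mcm x"
  proof
    fix q assume q: "q \<in> orbit_of Mcm (aff_apply g x)"
    have gi: "aff_inv g \<in> NAex" using NAex_inv[OF g] by blast
    have "orbit_of Mcm (aff_apply (aff_inv g) q) = orbit_of Mcm (aff_apply (aff_inv g) (aff_apply g x))"
      using orbit_NA[OF gi q] .
    then have "orbit_of Mcm (aff_apply (aff_inv g) q) = orbit_of Mcm x" using aff_inv_cancel[OF g] by simp
    moreover have "aff_apply (aff_inv g) q \<in> orbit_of Mcm (aff_apply (aff_inv g) q)" by (rule orbit_self)
    ultimately have "aff_apply (aff_inv g) q \<in> orbit_of Mcm x" by simp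
    moreover have "q = aff_apply g (aff_apply (aff_inv g) q)" using aff_inv_cancel[OF g] by simp
    ultimately show "q \<in> aff_apply g ` orbit_of Mcm x" by blast
  qed
qed

lemma dist_aff: assumes "g \<in> NAex" shows "dist (aff_apply g p) (aff_apply g q) = dist p q"
proof -
  obtain a B where e: "g = (a, B)" by (cases g)
  have B: "Q4 B" using assms e by (simp add: NAex_def)
  have "aff_apply g p - aff_apply g q = B *v (p - q)" by (simp add: e matrix_vector_mult_diff_distrib)
  then show ?thesis by (simp add: dist_norm Q4_norm[OF B])
qed

lemma orb_dist_iso: assumes g: "g \<in> NAex"
  shows "orb_dist (orbit_of Mcm (aff_apply g x)) (orbit_of Mcm (aff_apply g y)) = orb_dist (orbit_of Mcm x) (orbit_of Mcm y)"
proof -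
  have "{dist p q |p q. p \<in> orbit_of Mcm (aff_apply g x) \<and> q \<in> orbit_of Mcm (aff_apply g y)}
      = {dist p q |p q. p \<in> orbit_of Mcm x \<and> q \<in> orbit_of Mcm y}" (is "?L = ?R")
  proof
    show "?L \<subseteq> ?R"
    proof
      fix d assume "d \<in> ?L"
      then obtain p q where pq: "d = dist p q" "p \<in> orbit_of Mcm (aff_apply g x)" "q \<in> orbit_of Mcm (aff_apply g y)"
        by blast
      from pq(2) obtain p' where p': "p = aff_apply g p'" "p' \<in> orbit_of Mcm x" unfolding orbit_image[OF g] by (rule imageE)
      from pq(3) obtain q' where q': "q = aff_apply g q'" "q' \<in> orbit_of Mcm y" unfolding orbit_image[OF g] by (rule imageE)
      have "d = dist (aff_apply g p') (aff_apply g q')" "p' \<in> orbit_of Mcm x" "q' \<in> orbit_of Mcm y"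
        using pq p' q' by simp_all
      moreover have "dist (aff_apply g p') (aff_apply g q') = dist p' q'" by (rule dist_aff[OF g])
      ultimately show "d \<in> ?R" by blast
    qed
    show "?R \<subseteq> ?L"
    proof
      fix d assume "d \<in> ?R"
      then obtain p q where "d = dist p q" "p \<in> orbit_of Mcm x" "q \<in> orbit_of Mcm y" by blast
      then have "d = dist (aff_apply g p) (aff_apply g q)" "aff_apply g p \<in> orbit_of Mcm (aff_apply g x)"
         "aff_apply g q \<in> orbit_of Mcm (aff_apply g y)"
        using dist_aff[OF g] unfolding orbit_image[OF g] by simp_all
      then show "d \<in> ?L" by blast
    qed
  qed
  then show ?thesis by (simp add: orb_dist_def)
qed

lemma Aff_eq: "Aff Mcm = star Mcm ` NAex"
  by (simp add: Aff_def NA_eq)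

lemma Sym_eq: "Sym Mcm = Aff Mcm"
proof -
  have key: "orb_dist (star Mcm g X) (star Mcm g Y) = orb_dist X Y"
    if g: "g \<in> NAex" and XY: "X \<in> Orb Mcm" "Y \<in> Orb Mcm" for g X Y
  proof -
    from XY(1) obtain x where X: "X = orbit_of Mcm x" by (rule Orb_E)
    from XY(2) obtain y where Y: "Y = orbit_of Mcm y" by (rule Orb_E)
    show ?thesis unfolding X Y star_orbit[OF g] by (rule orb_dist_iso[OF g])
  qed
  show ?thesis unfolding Sym_def Aff_eq using key by blast
qed

lemma orb_dist_le: "p \<in> X \<Longrightarrow> q \<in> Y \<Longrightarrow> orb_dist X Y \<le> dist p q"
  unfolding orb_dist_def by (rule cInf_lower) (auto intro: bdd_belowI[of _ 0])

lemma orb_dist_ge: "p0 \<in> X \<Longrightarrow> q0 \<in> Y \<Longrightarrow> (\<And>p q. p \<in> X \<Longrightarrow> q \<in> Y \<Longrightarrow> d \<le> dist p q) \<Longrightarrow> d \<le> orb_dist X Y"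
  unfolding orb_dist_def by (rule cInf_greatest) auto

lemma orbit_floor: "y - vector [of_int \<lfloor>y$1\<rfloor>, of_int \<lfloor>y$2\<rfloor>] \<in> orbit_of Mcm y"
proof -
  have "(- vector [of_int \<lfloor>y$1\<rfloor>, of_int \<lfloor>y$2\<rfloor>], mat 1) \<in> Mex"
    by (simp add: Mex_def Zl_def vector_2)
  then show ?thesis unfolding orbit_mem
    by (rule bexI[rotated]) (simp add: matrix_vector_mul_lid)
qed

lemma orb_dist_2: "orb_dist (orbit_of Mcm y) (orbit_of Mcm z) \<le> 2"
proof -
  let ?p = "y - vector [of_int \<lfloor>y$1\<rfloor>, of_int \<lfloor>y$2\<rfloor>] :: real^2"
  let ?q = "z - vector [of_int \<lfloor>z$1\<rfloor>, of_int \<lfloor>z$2\<rfloor>] :: real^2"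
  have "dist ?p ?q \<le> \<bar>(?p - ?q)$1\<bar> + \<bar>(?p - ?q)$2\<bar>"
    using norm_le_l1_cart[of "?p - ?q"] by (simp add: dist_norm sum_2 del: vector_minus_component)
  also have "\<dots> \<le> 2"
    by (simp add: vector_2) linarith
  finally show ?thesis using orb_dist_le[OF orbit_floor[of y] orbit_floor[of z]] by linarith
qed

lemma Orb_ne: "Orb Mcm \<noteq> {}" by (simp add: Orb_def)

lemma sym_le: "(\<And>X. X \<in> Orb Mcm \<Longrightarrow> orb_dist (\<phi> X) (\<psi> X) \<le> e) \<Longrightarrow> sym_dist Mcm \<phi> \<psi> \<le> e"
  unfolding sym_dist_def by (rule cSup_least) (use Orb_ne in auto)

lemma sym_ge: assumes "g \<in> NAex" "h \<in> NAex" "X \<in> Orb Mcm"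
  shows "orb_dist (star Mcm g X) (star Mcm h X) \<le> sym_dist Mcm (star Mcm g) (star Mcm h)"
  unfolding sym_dist_def
proof (rule cSup_upper)
  show "orb_dist (star Mcm g X) (star Mcm h X) \<in> (\<lambda>X. orb_dist (star Mcm g X) (star Mcm h X)) ` Orb Mcm"
    using assms by blast
  have "orb_dist (star Mcm g Y) (star Mcm h Y) \<le> 2" if "Y \<in> Orb Mcm" for Y
    using that assms by (metis Orb_E star_orbit orb_dist_2)
  then show "bdd_above ((\<lambda>X. orb_dist (star Mcm g X) (star Mcm h X)) ` Orb Mcm)"
    by (auto intro: bdd_aboveI[of _ 2])
qed


lemma orb_lower:
  assumes "y$1 - y$2 \<in> \<int>" "z$1 - z$2 \<in> \<int>" "\<And>k. k \<in> \<int> \<Longrightarrow> d \<le> \<bar>y$1 - z$1 + k\<bar>"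
  shows "d \<le> orb_dist (orbit_of Mcm y) (orbit_of Mcm z)"
proof (rule orb_dist_ge[OF orbit_self orbit_self])
  fix p q assume p: "p \<in> orbit_of Mcm y" and q: "q \<in> orbit_of Mcm z"
  have kp: "p$1 - y$1 \<in> \<int>" using orbit_first[OF p assms(1)] .
  have kq: "q$1 - z$1 \<in> \<int>" using orbit_first[OF q assms(2)] .
  have e: "p$1 - q$1 = y$1 - z$1 + ((p$1 - y$1) - (q$1 - z$1))" by simp
  have "d \<le> \<bar>p$1 - q$1\<bar>" unfolding e by (rule assms(3)) (rule Ints_diff[OF kp kq])
  also have "\<dots> = \<bar>(p - q)$1\<bar>" by simp
  also have "\<dots> \<le> dist p q" unfolding dist_norm by (rule component_le_norm_cart)
  finally show "d \<le> dist p q" .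
qed

lemma norm_vw: "norm (vector [w, w] :: real^2) \<le> 2 * \<bar>w\<bar>"
  using norm_le_l1_cart[of "vector [w, w] :: real^2"] by (simp add: sum_2 vector_2)

lemma sym_upper:
  assumes g: "(a, B) \<in> NAex" and h: "(b, C) \<in> NAex" and p: "pos B \<longleftrightarrow> pos C" and k: "k \<in> \<int>"
  shows "sym_dist Mcm (star Mcm (a, B)) (star Mcm (b, C)) \<le> 2 * \<bar>a$1 - b$1 - k\<bar>"
proof -
  define w where "w = a$1 - b$1 - k"
  define h' where "h' = (a - vector [w, w], B)"
  have B: "Q4 B" "a$1 - a$2 \<in> \<int>" using g by (auto simp: NAex_def)
  have h'N: "h' \<in> NAex" using B by (simp add: h'_def NAex_def vector_2)
  have "star Mcm h' = star Mcm (b, C)" unfolding h'_def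
    by (rule star_eq_suff) (use h'N h p k in \<open>auto simp: h'_def w_def vector_2\<close>)
  then have sh: "star Mcm (b, C) = star Mcm h'" by simp
  show ?thesis unfolding sh w_def[symmetric]
  proof (rule sym_le)
    fix X assume "X \<in> Orb Mcm"
    then obtain x where X: "X = orbit_of Mcm x" by (rule Orb_E)
    have "orb_dist (star Mcm (a, B) X) (star Mcm h' X) \<le> dist (aff_apply (a, B) x) (aff_apply h' x)"
      unfolding X star_orbit[OF g] star_orbit[OF h'N] by (rule orb_dist_le[OF orbit_self orbit_self])
    also have "\<dots> = norm (vector [w, w] :: real^2)" by (simp add: h'_def dist_norm)
    also have "\<dots> \<le> 2 * \<bar>w\<bar>" by (rule norm_vw)
    finally show "orb_dist (star Mcm (a, B) X) (star Mcm h' X) \<le> 2 * \<bar>w\<bar>" .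
  qed
qed

lemma sym_lower:
  assumes g: "(a, B) \<in> NAex" and h: "(b, C) \<in> NAex" and d: "\<And>k. k \<in> \<int> \<Longrightarrow> d \<le> \<bar>a$1 - b$1 + k\<bar>"
  shows "d \<le> sym_dist Mcm (star Mcm (a, B)) (star Mcm (b, C))"
proof -
  have "d \<le> orb_dist (orbit_of Mcm a) (orbit_of Mcm b)"
    by (rule orb_lower) (use g h d in \<open>auto simp: NAex_def\<close>)
  also have "\<dots> = orb_dist (star Mcm (a, B) (orbit_of Mcm 0)) (star Mcm (b, C) (orbit_of Mcm 0))"
    using g h by (simp add: star_orbit)
  also have "\<dots> \<le> sym_dist Mcm (star Mcm (a, B)) (star Mcm (b, C))"
    by (rule sym_ge[OF g h Orb_I])
  finally show ?thesis .
qed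

lemma half_le: "k \<in> \<int> \<Longrightarrow> 1/2 \<le> \<bar>1/2 + (k::real)\<bar>"
proof -
  assume "k \<in> \<int>"
  then obtain n where n: "k = of_int n" by (auto elim: Ints_cases)
  show ?thesis
  proof (cases "n \<ge> 0")
    case True then show ?thesis using n by simp
  next
    case False then have "n \<le> -1" by simp
    then have "k \<le> -1" using n by simp
    then show ?thesis by simp
  qed
qed

lemma sym_lower_pos:
  assumes g: "(a, B) \<in> NAex" and h: "(b, C) \<in> NAex" and p: "\<not> (pos B \<longleftrightarrow> pos C)"
  shows "1/2 \<le> sym_dist Mcm (star Mcm (a, B)) (star Mcm (b, C))"
proof -
  have B: "Q4 B" "a$1 - a$2 \<in> \<int>" and C: "Q4 C" "b$1 - b$2 \<in> \<int>" using g h by (auto simp: NAex_def)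
  have sne: "sg B - sg C \<noteq> 0" using p by (auto simp: sg_def)
  define t where "t = (1/2 - (a$1 - b$1)) / (sg B - sg C)"
  define x where "x = (vector [t, t] :: real^2)"
  have ty: "(sg B - sg C) * t = 1/2 - (a$1 - b$1)" using sne by (simp add: t_def)
  have y: "(aff_apply (a, B) x)$1 = a$1 + sg B * t" "(aff_apply (a, B) x)$2 = a$2 + sg B * t"
    using Q4_diag[OF B(1), of t] by (simp_all add: x_def)
  have z: "(aff_apply (b, C) x)$1 = b$1 + sg C * t" "(aff_apply (b, C) x)$2 = b$2 + sg C * t"
    using Q4_diag[OF C(1), of t] by (simp_all add: x_def)
  have e: "(aff_apply (a, B) x)$1 - (aff_apply (b, C) x)$1 = 1/2"
    using ty unfolding y z by (simp add: algebra_simps)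
  have "1/2 \<le> orb_dist (orbit_of Mcm (aff_apply (a, B) x)) (orbit_of Mcm (aff_apply (b, C) x))"
  proof (rule orb_lower)
    show "(aff_apply (a, B) x)$1 - (aff_apply (a, B) x)$2 \<in> \<int>" unfolding y using B(2) by simp
    show "(aff_apply (b, C) x)$1 - (aff_apply (b, C) x)$2 \<in> \<int>" unfolding z using C(2) by simp
    fix k :: real assume k: "k \<in> \<int>"
    have eq: "(aff_apply (a, B) x)$1 - (aff_apply (b, C) x)$1 + k = 1/2 + k" using e by simp
    show "1/2 \<le> \<bar>(aff_apply (a, B) x)$1 - (aff_apply (b, C) x)$1 + k\<bar>" unfolding eq by (rule half_le[OF k])
  qed
  also have "\<dots> = orb_dist (star Mcm (a, B) (orbit_of Mcm x)) (star Mcm (b, C) (orbit_of Mcm x))"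
    using g h by (simp add: star_orbit)
  also have "\<dots> \<le> sym_dist Mcm (star Mcm (a, B)) (star Mcm (b, C))"
    by (rule sym_ge[OF g h Orb_I])
  finally show ?thesis .
qed


definition rot :: "real \<Rightarrow> real^2^2" where
  "rot t = vector [vector [cos t, - sin t], vector [sin t, cos t]]"
definition rotD :: "real \<Rightarrow> real^2^2" where
  "rotD t = vector [vector [cos t, sin t], vector [sin t, - cos t]]"
definition Phi :: "bool \<Rightarrow> real \<Rightarrow> real^2^2" where
  "Phi p s = (if p then rot (2*pi * s) else rotD (2*pi * s))"
definition Fm :: "aff \<Rightarrow> real^2^2" where
  "Fm g = Phi (pos (snd g)) ((fst g)$1)"

lemma rot_nth [simp]: "rot t $ 1 $ 1 = cos t" "rot t $ 1 $ 2 = - sin t" "rot t $ 2 $ 1 = sin t" "rot t $ 2 $ 2 = cos t"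
  by (simp_all add: rot_def vector_2)
lemma rotD_nth [simp]: "rotD t $ 1 $ 1 = cos t" "rotD t $ 1 $ 2 = sin t" "rotD t $ 2 $ 1 = sin t" "rotD t $ 2 $ 2 = - cos t"
  by (simp_all add: rotD_def vector_2)

lemma mat_eq2: "(X::real^2^2) = Y \<longleftrightarrow> X$1$1 = Y$1$1 \<and> X$1$2 = Y$1$2 \<and> X$2$1 = Y$2$1 \<and> X$2$2 = Y$2$2"
  by (auto simp: vec_eq_iff forall_2)

lemma mm_nth: "((X::real^2^2) ** Y)$i$j = X$i$1 * Y$1$j + X$i$2 * Y$2$j"
  by (simp add: matrix_matrix_mult_def sum_2)

lemma cos_shift: "k \<in> \<int> \<Longrightarrow> cos (2*pi*(s + k)) = cos (2*pi * s)"
  by (simp add: distrib_left cos_add cos_integer_2pi sin_integer_2pi)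
lemma sin_shift: "k \<in> \<int> \<Longrightarrow> sin (2*pi*(s + k)) = sin (2*pi * s)"
  by (simp add: distrib_left sin_add cos_integer_2pi sin_integer_2pi)

lemma Phi_int: assumes "s - s' \<in> \<int>" shows "Phi p s = Phi p s'"
proof -
  have s: "s = s' + (s - s')" by simp
  have "cos (2*pi * s) = cos (2*pi * s')" "sin (2*pi * s) = sin (2*pi * s')"
    by (subst s, rule cos_shift[OF assms], subst s, rule sin_shift[OF assms])
  then show ?thesis by (simp add: Phi_def rot_def rotD_def)
qed

lemma Phi_mult: "Phi p s ** Phi q t = Phi (p = q) (s + (if p then t else -t))"
  by (cases p; cases q) (simp_all add: Phi_def mat_eq2 mm_nth distrib_left cos_add sin_add cos_diff sin_diff
      algebra_simps)

lemma Q4_first: assumes "Q4 B" "b$1 - b$2 \<in> \<int>" shows "(B *v b)$1 - sg B * b$1 \<in> \<int>"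
  using assms(1) unfolding Q4_def
proof (elim disjE)
  assume "B = matA" then show ?thesis using Ints_swap[OF assms(2)] by (simp add: sg_def)
next
  assume "B = - matA" then show ?thesis using assms(2) by (simp add: sg_def)
qed (simp_all add: sg_def matrix_vector_mul_lid)

lemma Fm_mult: assumes g: "g \<in> NAex" and h: "h \<in> NAex" shows "Fm (aff_mult g h) = Fm g ** Fm h"
proof -
  obtain a B b C where e: "g = (a, B)" "h = (b, C)" by (cases g; cases h)
  have B: "Q4 B" "a$1 - a$2 \<in> \<int>" and C: "Q4 C" "b$1 - b$2 \<in> \<int>" using g h e by (auto simp: NAex_def)
  have "(a + B *v b)$1 - (a$1 + (if pos B then b$1 else - b$1)) = (B *v b)$1 - sg B * b$1"
    by (simp add: sg_def)
  then have "(a + B *v b)$1 - (a$1 + (if pos B then b$1 else - b$1)) \<in> \<int>" using Q4_first[OF B(1) C(2)] by simp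
  then show ?thesis using e pos_mult[OF B(1) C(1)] by (simp add: Fm_def Phi_mult Phi_int)
qed

lemma sin_cos_zero: "cos (x::real) = 0 \<Longrightarrow> sin x = 0 \<Longrightarrow> False"
  using sin_cos_squared_add[of x] by simp

lemma Phi_inj: assumes "Phi p s = Phi q t" shows "p = q \<and> s - t \<in> \<int>"
proof -
  have pq: "p = q"
  proof (rule ccontr)
    assume "p \<noteq> q"
    then have "cos (2*pi * s) = 0 \<and> sin (2*pi * s) = 0" using assms
      by (cases p; cases q) (simp_all add: Phi_def mat_eq2)
    then show False using sin_cos_zero by blast
  qed
  have cs: "cos (2*pi * s) = cos (2*pi * t)" "sin (2*pi * s) = sin (2*pi * t)" using assms pq
    by (cases p; simp add: Phi_def mat_eq2)+
  have "cos (2*pi * s - 2*pi * t) = 1" unfolding cos_diff cs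
    by (metis sin_cos_squared_add add.commute power2_eq_square)
  then obtain n :: int where "2*pi * s - 2*pi * t = real_of_int n * 2 * pi"
    using cos_one_2pi_int[THEN iffD1] by blast
  then have "(2*pi) * (s - t - n) = 0" by (simp add: algebra_simps)
  then have "s - t = n" by simp
  then show ?thesis using pq by simp
qed

lemma Fm_star: assumes g: "g \<in> NAex" and h: "h \<in> NAex"
  shows "star Mcm g = star Mcm h \<longleftrightarrow> Fm g = Fm h"
proof -
  obtain a B b C where e: "g = (a, B)" "h = (b, C)" by (cases g; cases h)
  show ?thesis
  proof
    assume "star Mcm g = star Mcm h"
    then have "(pos B \<longleftrightarrow> pos C) \<and> a$1 - b$1 \<in> \<int>" using star_eq_iff g h e by blast
    then show "Fm g = Fm h" using e by (simp add: Fm_def Phi_int)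
  next
    assume "Fm g = Fm h"
    then have "(pos B \<longleftrightarrow> pos C) \<and> a$1 - b$1 \<in> \<int>" using e Phi_inj by (simp add: Fm_def)
    then show "star Mcm g = star Mcm h" using star_eq_iff g h e by blast
  qed
qed

lemma Phi_orth: "orthogonal_matrix (Phi p s)"
  unfolding orthogonal_matrix
  by (cases p) (simp_all add: Phi_def mat_eq2 mm_nth transpose_def mat_def power2_eq_square[symmetric]
      algebra_simps)


lemma alg1: "(c::real) * (c * q12 + s * q22) - s * (q22 * c - q12 * s) = q12 * (s^2 + c^2)"
  by (simp add: algebra_simps power2_eq_square)
lemma alg2: "(s::real) * (c * q12 + s * q22) + c * (q22 * c - q12 * s) = q22 * (s^2 + c^2)"
  by (simp add: algebra_simps power2_eq_square)
lemma alg3: "(u::real)^2 * (s^2 + c^2) = (- s * u)^2 + (c * u)^2"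
  by (simp add: algebra_simps power2_eq_square)
lemma alg4: "((c1::real) - c2)^2 + (- s1 - s2)^2 + (s1 - s2)^2 + (c1 + c2)^2 = 2 * (s1^2 + c1^2) + 2 * (s2^2 + c2^2)"
  by (simp add: algebra_simps power2_eq_square)
lemma alg5: "((c1::real) - c2)^2 + (s1 + s2)^2 + (s1 - s2)^2 + (- c1 - c2)^2 = 2 * (s1^2 + c1^2) + 2 * (s2^2 + c2^2)"
  by (simp add: algebra_simps power2_eq_square)
lemma alg6: "((c1::real) - c2)^2 + (- s1 + s2)^2 + (s1 - s2)^2 + (c1 - c2)^2 = 2 * (s1^2 + c1^2) + 2 * (s2^2 + c2^2) - 4 * (c1 * c2 + s1 * s2)"
  by (simp add: algebra_simps power2_eq_square)
lemma alg7: "((c1::real) - c2)^2 + (s1 - s2)^2 + (s1 - s2)^2 + (- c1 + c2)^2 = 2 * (s1^2 + c1^2) + 2 * (s2^2 + c2^2) - 4 * (c1 * c2 + s1 * s2)"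
  by (simp add: algebra_simps power2_eq_square)

lemma orth_Phi: assumes "orthogonal_matrix (Q::real^2^2)" shows "\<exists>p s. Q = Phi p s"
proof -
  have o: "transpose Q ** Q = mat 1" using assms by (simp add: orthogonal_matrix)
  have e1: "(Q$1$1)^2 + (Q$2$1)^2 = 1" and e2: "(Q$1$2)^2 + (Q$2$2)^2 = 1"
    and e3: "Q$1$1 * Q$1$2 + Q$2$1 * Q$2$2 = 0"
    using o by (simp_all add: mat_eq2 mm_nth transpose_def mat_def power2_eq_square)
  obtain th where th: "Q$1$1 = cos th" "Q$2$1 = sin th" using sincos_total_2pi[OF e1] by metis
  define u where "u = Q$2$2 * cos th - Q$1$2 * sin th"
  have sc: "(sin th)^2 + (cos th)^2 = 1" by simp
  have h1: "cos th * Q$1$2 + sin th * Q$2$2 = 0" using e3 th by simp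
  have q12: "Q$1$2 = - sin th * u"
  proof -
    have "Q$1$2 = Q$1$2 * ((sin th)^2 + (cos th)^2)" by (simp only: sc mult_1_right)
    also have "\<dots> = cos th * (cos th * Q$1$2 + sin th * Q$2$2) - sin th * u"
      unfolding u_def by (rule alg1[symmetric])
    also have "\<dots> = - sin th * u" using h1 by simp
    finally show ?thesis .
  qed
  have q22: "Q$2$2 = cos th * u"
  proof -
    have "Q$2$2 = Q$2$2 * ((sin th)^2 + (cos th)^2)" by (simp only: sc mult_1_right)
    also have "\<dots> = sin th * (cos th * Q$1$2 + sin th * Q$2$2) + cos th * u"
      unfolding u_def by (rule alg2[symmetric])
    also have "\<dots> = cos th * u" using h1 by simp
    finally show ?thesis .
  qed
  have "u^2 = 1"
  proof -
    have "u^2 = u^2 * ((sin th)^2 + (cos th)^2)" by (simp only: sc mult_1_right)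
    also have "\<dots> = (Q$1$2)^2 + (Q$2$2)^2" unfolding q12 q22 by (rule alg3)
    finally show ?thesis using e2 by simp
  qed
  then have "u = 1 \<or> u = -1" by (simp add: power2_eq_1_iff)
  then show ?thesis
  proof
    assume "u = 1"
    then have "Q = Phi True (th / (2*pi))" using th q12 q22 by (simp add: Phi_def mat_eq2)
    then show ?thesis by blast
  next
    assume "u = -1"
    then have "Q = Phi False (th / (2*pi))" using th q12 q22 by (simp add: Phi_def mat_eq2)
    then show ?thesis by blast
  qed
qed

lemma normM: "norm (X::real^2^2) = sqrt ((X$1$1)^2 + (X$1$2)^2 + (X$2$1)^2 + (X$2$2)^2)"
  by (simp add: norm_vec_def L2_set_def sum_2 norm2 add.assoc)

lemma Phi_dist_ne: "p \<noteq> q \<Longrightarrow> norm (Phi p s - Phi q t) = 2"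
proof -
  assume "p \<noteq> q"
  have *: "(cos x - cos y)^2 + (- sin x - sin y)^2 + (sin x - sin y)^2 + (cos x + cos y)^2 = 4" for x y :: real
    unfolding alg4 by simp
  have **: "(cos x - cos y)^2 + (sin x + sin y)^2 + (sin x - sin y)^2 + (- cos x - cos y)^2 = 4" for x y :: real
    unfolding alg5 by simp
  show ?thesis using \<open>p \<noteq> q\<close> * **
    by (cases p; cases q) (simp_all add: normM Phi_def)
qed

lemma Phi_dist_eq: "norm (Phi p s - Phi p t) = sqrt (4 - 4 * cos (2 * pi * (s - t)))"
proof -
  have *: "(cos x - cos y)^2 + (- sin x + sin y)^2 + (sin x - sin y)^2 + (cos x - cos y)^2 = 4 - 4 * cos (x - y)"
    for x y :: real
    unfolding alg6 by (simp add: cos_diff)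
  have **: "(cos x - cos y)^2 + (sin x - sin y)^2 + (sin x - sin y)^2 + (- cos x + cos y)^2 = 4 - 4 * cos (x - y)"
    for x y :: real
    unfolding alg7 by (simp add: cos_diff)
  have e: "2 * pi * (s - t) = 2 * pi * s - 2 * pi * t" by (simp add: algebra_simps)
  show ?thesis unfolding e using * **
    by (cases p) (simp_all add: normM Phi_def)
qed


lemma cont1:
  assumes g: "(a, B) \<in> NAex" and h: "(b, C) \<in> NAex" and e: "e > 0"
    and sd: "sym_dist Mcm (star Mcm (a, B)) (star Mcm (b, C)) < min (1/2) (e/20)"
  shows "norm (Fm (a, B) - Fm (b, C)) < e"
proof -
  define d where "d = min (1/2) (e/20)"
  have p: "pos B \<longleftrightarrow> pos C"
  proof (rule ccontr)
    assume "\<not> (pos B \<longleftrightarrow> pos C)"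
    from sym_lower_pos[OF g h this] sd show False by (simp add: d_def)
  qed
  obtain k where k: "k \<in> \<int>" "\<bar>a$1 - b$1 + k\<bar> < d"
  proof -
    have "\<not> (\<forall>k. k \<in> \<int> \<longrightarrow> d \<le> \<bar>a$1 - b$1 + k\<bar>)"
    proof
      assume "\<forall>k. k \<in> \<int> \<longrightarrow> d \<le> \<bar>a$1 - b$1 + k\<bar>"
      then have "d \<le> sym_dist Mcm (star Mcm (a, B)) (star Mcm (b, C))" using sym_lower[OF g h] by blast
      then show False using sd by (simp add: d_def)
    qed
    then show ?thesis using that by force
  qed
  define v where "v = a$1 - b$1 + k"
  have cv: "cos (2 * pi * v) = cos (2 * pi * (a$1 - b$1))" unfolding v_def by (rule cos_shift[OF k(1)])
  have nv: "norm (Fm (a, B) - Fm (b, C)) = sqrt (4 - 4 * cos (2 * pi * v))"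
    using p by (simp add: Fm_def cv Phi_dist_eq)
  have "4 - 4 * cos (2 * pi * v) = 8 * (sin (pi * v))^2"
    using cos_double_sin[of "pi * v"] by (simp add: mult.assoc)
  also have "\<dots> \<le> 8 * (pi * v)^2"
  proof -
    have "\<bar>sin (pi * v)\<bar> \<le> \<bar>pi * v\<bar>" by (rule abs_sin_x_le_abs_x)
    then have "(sin (pi * v))^2 \<le> (pi * v)^2" by (simp add: abs_le_square_iff)
    then show ?thesis by simp
  qed
  also have "\<dots> < e^2"
  proof -
    have v: "\<bar>v\<bar> < e/20" using k(2) by (simp add: v_def d_def)
    have "\<bar>pi * v\<bar> = pi * \<bar>v\<bar>" by (simp add: abs_mult)
    also have "\<dots> \<le> 4 * \<bar>v\<bar>" using pi_less_4 by (intro mult_right_mono) auto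
    also have "\<dots> < e/5" using v by simp
    finally have "\<bar>pi * v\<bar> < e/5" .
    then have "\<bar>pi * v\<bar>^2 < (e/5)^2" by (rule power_strict_mono) auto
    then have "(pi * v)^2 < e^2/25" by (simp add: power_divide)
    then show ?thesis using e zero_le_power2[of "pi * v"] by linarith
  qed
  finally have "4 - 4 * cos (2 * pi * v) < e^2" .
  then have "sqrt (4 - 4 * cos (2 * pi * v)) < sqrt (e^2)" by (rule real_sqrt_less_mono)
  then show ?thesis using nv e by simp
qed


lemma cos_lt1: "0 < x \<Longrightarrow> x \<le> pi \<Longrightarrow> cos x < 1"
  using cos_monotone_0_pi[of 0 x] by simp

lemma cont2:
  assumes g: "(a, B) \<in> NAex" and h: "(b, C) \<in> NAex" and e: "e > 0"
    and nd: "norm (Fm (a, B) - Fm (b, C)) < min 2 (sqrt (4 - 4 * cos (2 * pi * min (e/4) (1/4))))"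
  shows "sym_dist Mcm (star Mcm (a, B)) (star Mcm (b, C)) < e"
proof -
  define e' where "e' = min (e/4) (1/4)"
  have e'0: "0 < e'" "e' \<le> 1/4" "e' \<le> e/4" using e by (auto simp: e'_def)
  have p: "pos B \<longleftrightarrow> pos C"
  proof (rule ccontr)
    assume "\<not> (pos B \<longleftrightarrow> pos C)"
    then have "norm (Fm (a, B) - Fm (b, C)) = 2" using Phi_dist_ne[of "pos B" "pos C" "a$1" "b$1"] by (simp add: Fm_def)
    then show False using nd by simp
  qed
  define u where "u = a$1 - b$1"
  have "sqrt (4 - 4 * cos (2 * pi * u)) < sqrt (4 - 4 * cos (2 * pi * e'))"
    using nd p by (simp add: Fm_def Phi_dist_eq u_def e'_def)
  then have cu: "cos (2 * pi * e') < cos (2 * pi * u)" by simp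
  define k :: real where "k = - of_int \<lfloor>u + 1/2\<rfloor>"
  have kZ: "k \<in> \<int>" by (simp add: k_def)
  define v where "v = u + k"
  have f1: "of_int \<lfloor>u + 1/2\<rfloor> \<le> u + 1/2" by (rule of_int_floor_le)
  have f2: "u + 1/2 < of_int \<lfloor>u + 1/2\<rfloor> + 1" by (rule real_of_int_floor_add_one_gt)
  have vb1: "- (1/2) \<le> v" unfolding v_def k_def using f1 f2 by linarith
  have vb2: "v < 1/2" unfolding v_def k_def using f1 f2 by linarith
  note vb = vb1 vb2
  have "cos (2 * pi * v) = cos (2 * pi * u)" unfolding v_def by (rule cos_shift[OF kZ])
  moreover have "cos (2 * pi * \<bar>v\<bar>) = cos (2 * pi * v)"
  proof -
    have "2 * pi * \<bar>v\<bar> = \<bar>2 * pi * v\<bar>" by (simp add: abs_mult)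
    then show ?thesis by (simp only: cos_abs_real)
  qed
  ultimately have cv: "cos (2 * pi * e') < cos (2 * pi * \<bar>v\<bar>)" using cu by simp
  have ve: "\<bar>v\<bar> < e'"
  proof (rule ccontr)
    assume "\<not> \<bar>v\<bar> < e'"
    then have "2 * pi * e' \<le> 2 * pi * \<bar>v\<bar>" by simp
    moreover have "2 * pi * \<bar>v\<bar> \<le> pi" using vb by simp
    moreover have "0 \<le> 2 * pi * e'" using e'0 by simp
    ultimately have "cos (2 * pi * \<bar>v\<bar>) \<le> cos (2 * pi * e')" by (intro cos_monotone_0_pi_le)
    then show False using cv by simp
  qed
  have "sym_dist Mcm (star Mcm (a, B)) (star Mcm (b, C)) \<le> 2 * \<bar>a$1 - b$1 - (- k)\<bar>"
    by (rule sym_upper[OF g h p]) (use kZ in simp)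
  also have "\<dots> = 2 * \<bar>v\<bar>" by (simp add: v_def u_def)
  also have "\<dots> < e" using ve e'0 e by simp
  finally show ?thesis .
qed

lemma cont2_pos: "e > 0 \<Longrightarrow> 0 < min 2 (sqrt (4 - 4 * cos (2 * pi * min (e/4) (1/4))))"
proof -
  assume e: "e > 0"
  have "0 < 2 * pi * min (e/4) (1/4)" using e by simp
  moreover have "2 * pi * min (e/4) (1/4) \<le> pi" by (simp add: min_def)
  ultimately have "cos (2 * pi * min (e/4) (1/4)) < 1" by (rule cos_lt1)
  then show ?thesis by simp
qed

definition fO :: "((real^2) set \<Rightarrow> (real^2) set) \<Rightarrow> real^2^2" where
  "fO \<phi> = Fm (SOME g. g \<in> NAex \<and> star Mcm g = \<phi>)"

lemma fO_star: assumes "g \<in> NAex" shows "fO (star Mcm g) = Fm g"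
proof -
  have "\<exists>g'. g' \<in> NAex \<and> star Mcm g' = star Mcm g" using assms by blast
  then have s: "(SOME g'. g' \<in> NAex \<and> star Mcm g' = star Mcm g) \<in> NAex \<and>
      star Mcm (SOME g'. g' \<in> NAex \<and> star Mcm g' = star Mcm g) = star Mcm g" by (rule someI_ex)
  then show ?thesis unfolding fO_def using Fm_star[OF _ assms] by blast
qed

lemma Sym_star: "Sym Mcm = star Mcm ` NAex"
  by (simp add: Sym_eq Aff_eq)

lemma Sym_obtain: "\<phi> \<in> Sym Mcm \<Longrightarrow> (\<And>a B. (a, B) \<in> NAex \<Longrightarrow> \<phi> = star Mcm (a, B) \<Longrightarrow> P) \<Longrightarrow> P"
  unfolding Sym_star by auto

lemma mult_star: assumes "g \<in> NAex" "h \<in> NAex"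
  shows "star Mcm g \<otimes>\<^bsub>BijGroup (Orb Mcm)\<^esub> star Mcm h = star Mcm (aff_mult g h)"
  using star_Bij[OF assms(1)] star_Bij[OF assms(2)] star_mult[OF assms]
  by (simp add: BijGroup_def)

lemma fO_iso: "fO \<in> iso (SymGrp Mcm) O2"
proof -
  have carr: "carrier (SymGrp Mcm) = star Mcm ` NAex" by (simp add: SymGrp_def BijGroup_def Sym_star)
  have mul: "x \<otimes>\<^bsub>SymGrp Mcm\<^esub> y = x \<otimes>\<^bsub>BijGroup (Orb Mcm)\<^esub> y" for x y by (simp add: SymGrp_def)
  have cO: "carrier O2 = {Q. orthogonal_matrix Q}" and mO: "x \<otimes>\<^bsub>O2\<^esub> y = x ** y" for x y
    by (simp_all add: O2_def)
  have hom: "fO \<in> hom (SymGrp Mcm) O2"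
  proof (rule homI)
    fix x assume "x \<in> carrier (SymGrp Mcm)"
    then obtain g where g: "g \<in> NAex" "x = star Mcm g" using carr by blast
    show "fO x \<in> carrier O2" using g by (cases g) (simp add: fO_star cO Fm_def Phi_orth)
  next
    fix x y assume "x \<in> carrier (SymGrp Mcm)" "y \<in> carrier (SymGrp Mcm)"
    then obtain g h where g: "g \<in> NAex" "x = star Mcm g" and h: "h \<in> NAex" "y = star Mcm h" using carr by blast
    show "fO (x \<otimes>\<^bsub>SymGrp Mcm\<^esub> y) = fO x \<otimes>\<^bsub>O2\<^esub> fO y"
      using g h by (simp add: mul mO mult_star fO_star NAex_mult Fm_mult)
  qed
  have inj: "inj_on fO (carrier (SymGrp Mcm))"
  proof (rule inj_onI)
    fix x y assume "x \<in> carrier (SymGrp Mcm)" "y \<in> carrier (SymGrp Mcm)" "fO x = fO y"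
    then obtain g h where g: "g \<in> NAex" "x = star Mcm g" and h: "h \<in> NAex" "y = star Mcm h" and "fO x = fO y"
      using carr by blast
    then show "x = y" using Fm_star[OF g(1) h(1)] by (simp add: fO_star)
  qed
  have img: "fO ` carrier (SymGrp Mcm) = carrier O2"
  proof
    show "fO ` carrier (SymGrp Mcm) \<subseteq> carrier O2" using hom by (auto simp: hom_def)
    show "carrier O2 \<subseteq> fO ` carrier (SymGrp Mcm)"
    proof
      fix Q assume "Q \<in> carrier O2"
      then obtain p s where Q: "Q = Phi p s" using orth_Phi cO by blast
      define g where "g = (vector [s, s] :: real^2, if p then mat 1 else - mat 1 :: real^2^2)"
      have gN: "g \<in> NAex" by (simp add: g_def NAex_def vector_2)
      have "Fm g = Q" by (cases p) (simp_all add: g_def Fm_def Q vector_2)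
      then show "Q \<in> fO ` carrier (SymGrp Mcm)" using gN carr fO_star[OF gN] by force
    qed
  qed
  show ?thesis using hom inj img by (simp add: iso_def bij_betw_def)
qed

lemma fO_homeo: "homeo_Sym_O2 Mcm fO"
  unfolding homeo_Sym_O2_def
proof (intro conjI ballI allI impI)
  fix \<phi> :: "(real^2) set \<Rightarrow> (real^2) set" and e :: real
  assume \<phi>: "\<phi> \<in> Sym Mcm" and e: "0 < e"
  obtain a B where g: "(a, B) \<in> NAex" "\<phi> = star Mcm (a, B)" using \<phi> by (rule Sym_obtain)
  show "\<exists>d>0. \<forall>\<psi>\<in>Sym Mcm. sym_dist Mcm \<phi> \<psi> < d \<longrightarrow> norm (fO \<phi> - fO \<psi>) < e"
  proof (intro exI[of _ "min (1/2) (e/20)"] conjI ballI impI)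
    show "0 < min (1/2) (e/20)" using e by simp
    fix \<psi> assume \<psi>: "\<psi> \<in> Sym Mcm" and sd: "sym_dist Mcm \<phi> \<psi> < min (1/2) (e/20)"
    obtain b C where h: "(b, C) \<in> NAex" "\<psi> = star Mcm (b, C)" using \<psi> by (rule Sym_obtain)
    show "norm (fO \<phi> - fO \<psi>) < e" using cont1[OF g(1) h(1) e] sd g h by (simp add: fO_star)
  qed
next
  fix \<phi> :: "(real^2) set \<Rightarrow> (real^2) set" and e :: real
  assume \<phi>: "\<phi> \<in> Sym Mcm" and e: "0 < e"
  obtain a B where g: "(a, B) \<in> NAex" "\<phi> = star Mcm (a, B)" using \<phi> by (rule Sym_obtain)
  show "\<exists>d>0. \<forall>\<psi>\<in>Sym Mcm. norm (fO \<phi> - fO \<psi>) < d \<longrightarrow> sym_dist Mcm \<phi> \<psi> < e"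
  proof (intro exI[of _ "min 2 (sqrt (4 - 4 * cos (2 * pi * min (e/4) (1/4))))"] conjI ballI impI)
    show "0 < min 2 (sqrt (4 - 4 * cos (2 * pi * min (e/4) (1/4))))" using cont2_pos[OF e] .
    fix \<psi> assume \<psi>: "\<psi> \<in> Sym Mcm" and nd: "norm (fO \<phi> - fO \<psi>) < min 2 (sqrt (4 - 4 * cos (2 * pi * min (e/4) (1/4))))"
    obtain b C where h: "(b, C) \<in> NAex" "\<psi> = star Mcm (b, C)" using \<psi> by (rule Sym_obtain)
    show "sym_dist Mcm \<phi> \<psi> < e" using cont2[OF g(1) h(1) e] nd g h by (simp add: fO_star)
  qed
qed


lemma subgroup_Mcm: "subgroup Mcm AffGroup"
  unfolding Mcm_def
  by (rule group.generate_is_subgroup[OF group_Aff])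
     (auto simp: Q4_invertible[OF Q4_simps(1)] Q4_invertible[OF Q4_simps(2)])

lemma group_M: "group (Mgrp Mcm)"
  unfolding Mgrp_def by (rule subgroup.subgroup_is_group[OF subgroup_Mcm group_Aff])

lemma group_Aut: "group (AutoGroup (Mgrp Mcm))"
  by (rule group.AutoGroup[OF group_M])

lemma Mgrp_simps [simp]: "carrier (Mgrp Mcm) = Mex" "mult (Mgrp Mcm) = aff_mult" "one (Mgrp Mcm) = (0, mat 1)"
  by (simp_all add: Mgrp_def Mcm_eq)

lemma Aut_carrier [simp]: "carrier (AutoGroup (Mgrp Mcm)) = auto (Mgrp Mcm)"
  by (simp add: AutoGroup_def)

lemma auto_Bij: "x \<in> auto (Mgrp Mcm) \<Longrightarrow> x \<in> Bij Mex"
  by (simp add: auto_def)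

lemma Aut_mult: "x \<in> auto (Mgrp Mcm) \<Longrightarrow> y \<in> auto (Mgrp Mcm) \<Longrightarrow> x \<otimes>\<^bsub>AutoGroup (Mgrp Mcm)\<^esub> y = compose Mex x y"
  by (simp add: AutoGroup_def BijGroup_def auto_Bij)

lemma Aut_one: "\<one>\<^bsub>AutoGroup (Mgrp Mcm)\<^esub> = (\<lambda>x\<in>Mex. x)"
  by (simp add: AutoGroup_def BijGroup_def)

definition wv :: "real \<Rightarrow> real^2" where "wv j = vector [j, - j]"

definition tf :: "real^2^2 \<Rightarrow> real \<Rightarrow> aff \<Rightarrow> aff" where
  "tf B j = (\<lambda>x\<in>Mex. (B *v fst x + (if snd x = mat 1 then 0 else wv j), snd x))"

definition tau :: "real^2^2 \<Rightarrow> real" where "tau B = (if B = mat 1 \<or> B = - matA then 1 else -1)"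

lemma wv_nth [simp]: "wv j $ 1 = j" "wv j $ 2 = - j" by (simp_all add: wv_def vector_2)

lemma wv_add: "wv j + wv k = wv (j + k)" by (simp add: vec_eq_iff forall_2)

lemma tau_simps [simp]: "tau (mat 1) = 1" "tau matA = -1" "tau (- mat 1) = -1" "tau (- matA) = 1"
  by (simp_all add: tau_def)

lemma Q4_wv: "Q4 B \<Longrightarrow> B *v wv k = wv (tau B * k)"
  unfolding Q4_def by (elim disjE; hypsubst; simp only: tau_simps; simp add: vec_eq_iff forall_2 matrix_vector_mul_lid)

lemma tau_pm: "tau B = 1 \<or> tau B = -1" by (simp add: tau_def)

lemma conj_tf: assumes g: "(a, B) \<in> NAex" shows "conj_aut Mcm (a, B) = tf B (a$1 - a$2)"
proof -
  have B: "Q4 B" using g by (simp add: NAex_def)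
  have "conj_aff (a, B) x = (B *v fst x + (if snd x = mat 1 then 0 else wv (a$1 - a$2)), snd x)" if x: "x \<in> Mex" for x
  proof -
    obtain n C where xe: "x = (n, C)" by (cases x)
    have C: "C = mat 1 \<or> C = matA" using x xe by (simp add: Mex_def)
    show ?thesis using C
    proof
      assume "C = mat 1" then show ?thesis using conj_Q4[OF B, of C a n] xe by (simp add: matrix_vector_mul_lid)
    next
      assume CA: "C = matA"
      have "a - matA *v a = wv (a$1 - a$2)" by (simp add: vec_eq_iff forall_2)
      then show ?thesis using conj_Q4[OF B, of C a n] xe CA by (simp add: add.commute)
    qed
  qed
  then show ?thesis unfolding conj_aut_def tf_def Mcm_eq by (intro restrict_ext) simp
qed

lemma wv_Zl: "j \<in> \<int> \<Longrightarrow> wv j \<in> Zl" by (simp add: Zl_def)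

lemma tf_in: assumes "Q4 B" "j \<in> \<int>" "x \<in> Mex" shows "tf B j x \<in> Mex"
proof -
  obtain n C where xe: "x = (n, C)" by (cases x)
  have n: "n \<in> Zl" "C = mat 1 \<or> C = matA" using assms(3) xe by (auto simp: Mex_def)
  have "B *v n + (if C = mat 1 then 0 else wv j) \<in> Zl"
    using Zl_add[OF Zl_Q4[OF assms(1) n(1)] wv_Zl[OF assms(2)]] Zl_Q4[OF assms(1) n(1)] by simp
  then show ?thesis using assms(3) xe n by (simp add: tf_def Mex_def)
qed

lemma tf_comp: assumes B: "Q4 B" and C: "Q4 C" and k: "k \<in> \<int>"
  shows "compose Mex (tf B j) (tf C k) = tf (B ** C) (j + tau B * k)"
proof (rule ext)
  fix x show "compose Mex (tf B j) (tf C k) x = tf (B ** C) (j + tau B * k) x"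
  proof (cases "x \<in> Mex")
    case True
    have "tf C k x \<in> Mex" by (rule tf_in[OF C k True])
    then show ?thesis using True Q4_wv[OF B]
      by (simp add: compose_def tf_def matrix_vector_right_distrib matrix_vector_mul_assoc wv_add add.commute add.left_commute)
  next
    case False then show ?thesis by (simp add: compose_def tf_def)
  qed
qed

lemma tf_one: "tf (mat 1) 0 = (\<lambda>x\<in>Mex. x)"
  unfolding tf_def by (rule restrict_ext) (auto simp: Mex_def matrix_vector_mul_lid wv_def vec_eq_iff forall_2 vector_2)

lemma tf_eq: assumes "Q4 B" "Q4 C" "tf B j = tf C k" shows "B = C \<and> j = k"
proof -
  have m1: "(axis 1 1, mat 1) \<in> Mex" "(axis 2 1, mat 1) \<in> Mex" "(0, matA) \<in> Mex"
    by (simp_all add: Mex_def Zl_def axis_def)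
  have "tf B j (axis 1 1, mat 1) = tf C k (axis 1 1, mat 1)" "tf B j (axis 2 1, mat 1) = tf C k (axis 2 1, mat 1)"
    "tf B j (0, matA) = tf C k (0, matA)" using assms(3) by simp_all
  then have e: "B *v axis 1 1 = C *v axis 1 1" "B *v axis 2 1 = C *v axis 2 1" "wv j = wv k"
    using m1 by (simp_all add: tf_def)
  have "B = C" using e(1,2) by (simp add: vec_eq_iff forall_2 matrix_vector_mult_def sum_2 axis_def)
  moreover have "j = k" using arg_cong[OF e(3), of "\<lambda>v. v$1"] by simp
  ultimately show ?thesis by simp
qed


lemma inv_Aff': "invertible (snd g) \<Longrightarrow> inv\<^bsub>AffGroup\<^esub> g = aff_inv g"
  by (cases g) (simp add: inv_Aff)

lemma conj_auto: assumes g: "g \<in> NAex" shows "conj_aut Mcm g \<in> auto (Mgrp Mcm)"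
proof -
  interpret A: group AffGroup by (rule group_Aff)
  have gc: "g \<in> carrier AffGroup" using NAex_invertible[OF g] by simp
  have Mc: "m \<in> carrier AffGroup" if "m \<in> Mex" for m using Mex_invertible[OF that] by simp
  have cg: "conj_aff g m = g \<otimes>\<^bsub>AffGroup\<^esub> m \<otimes>\<^bsub>AffGroup\<^esub> inv\<^bsub>AffGroup\<^esub> g" for m
    by (simp add: conj_aff_def inv_Aff'[OF NAex_invertible[OF g]])
  have c: "z \<otimes>\<^bsub>AffGroup\<^esub> inv\<^bsub>AffGroup\<^esub> g \<otimes>\<^bsub>AffGroup\<^esub> g = z" if "z \<in> carrier AffGroup" for z
    using that gc by (simp add: A.m_assoc del: mult_Aff carrier_Aff one_Aff)
  have c2: "inv\<^bsub>AffGroup\<^esub> g \<otimes>\<^bsub>AffGroup\<^esub> (g \<otimes>\<^bsub>AffGroup\<^esub> z) = z" if "z \<in> carrier AffGroup" for z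
    using that gc by (simp add: A.m_assoc[symmetric] del: mult_Aff carrier_Aff one_Aff)
  have hom: "conj_aff g (aff_mult x y) = aff_mult (conj_aff g x) (conj_aff g y)" if "x \<in> Mex" "y \<in> Mex" for x y
  proof -
    have "g \<otimes>\<^bsub>AffGroup\<^esub> (x \<otimes>\<^bsub>AffGroup\<^esub> y) \<otimes>\<^bsub>AffGroup\<^esub> inv\<^bsub>AffGroup\<^esub> g =
        (g \<otimes>\<^bsub>AffGroup\<^esub> x \<otimes>\<^bsub>AffGroup\<^esub> inv\<^bsub>AffGroup\<^esub> g) \<otimes>\<^bsub>AffGroup\<^esub> (g \<otimes>\<^bsub>AffGroup\<^esub> y \<otimes>\<^bsub>AffGroup\<^esub> inv\<^bsub>AffGroup\<^esub> g)"
      using gc Mc[OF that(1)] Mc[OF that(2)] c2 by (simp add: A.m_assoc del: mult_Aff carrier_Aff one_Aff)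
    then show ?thesis by (simp add: cg)
  qed
  have inj: "inj_on (conj_aff g) Mex"
  proof (rule inj_onI)
    fix x y assume xy: "x \<in> Mex" "y \<in> Mex" "conj_aff g x = conj_aff g y"
    then have "g \<otimes>\<^bsub>AffGroup\<^esub> x \<otimes>\<^bsub>AffGroup\<^esub> inv\<^bsub>AffGroup\<^esub> g = g \<otimes>\<^bsub>AffGroup\<^esub> y \<otimes>\<^bsub>AffGroup\<^esub> inv\<^bsub>AffGroup\<^esub> g"
      by (simp add: cg)
    then show "x = y" using gc Mc[OF xy(1)] Mc[OF xy(2)] by (simp add: A.m_assoc[symmetric] del: mult_Aff carrier_Aff one_Aff)
  qed
  have "g \<in> NA Mcm" using g NA_eq by simp
  then have img: "conj_aff g ` Mex = Mex" by (simp add: NA_def Mcm_eq)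
  have ce: "conj_aut Mcm g = (\<lambda>m\<in>Mex. conj_aff g m)" by (simp add: conj_aut_def Mcm_eq)
  have "conj_aut Mcm g \<in> hom (Mgrp Mcm) (Mgrp Mcm)"
  proof (rule homI)
    fix x assume "x \<in> carrier (Mgrp Mcm)"
    then show "conj_aut Mcm g x \<in> carrier (Mgrp Mcm)" using conj_in[OF g] by (simp add: ce)
  next
    fix x y assume "x \<in> carrier (Mgrp Mcm)" "y \<in> carrier (Mgrp Mcm)"
    then show "conj_aut Mcm g (x \<otimes>\<^bsub>Mgrp Mcm\<^esub> y) = conj_aut Mcm g x \<otimes>\<^bsub>Mgrp Mcm\<^esub> conj_aut Mcm g y"
      using hom Mex_mult by (simp add: ce)
  qed
  moreover have "conj_aut Mcm g \<in> Bij Mex"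
    unfolding Bij_def ce using inj img by (simp add: bij_betw_def)
  ultimately show ?thesis by (simp add: auto_def)
qed

lemma Inn_eq: "Inn Mcm = {tf B j |B j. pos B \<and> j \<in> \<int>}"
proof
  show "Inn Mcm \<subseteq> {tf B j |B j. pos B \<and> j \<in> \<int>}"
  proof
    fix x assume "x \<in> Inn Mcm"
    then obtain m where m: "m \<in> Mex" "x = conj_aut Mcm m" by (auto simp: Inn_def Mcm_eq)
    obtain n C where me: "m = (n, C)" by (cases m)
    have "pos C" "n$1 - n$2 \<in> \<int>" using m me by (auto simp: Mex_def pos_def Zl_def)
    then show "x \<in> {tf B j |B j. pos B \<and> j \<in> \<int>}"
      using conj_tf[OF Mex_NAex[OF m(1)[unfolded me]]] m me by auto
  qed
next
  show "{tf B j |B j. pos B \<and> j \<in> \<int>} \<subseteq> Inn Mcm"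
  proof
    fix x assume "x \<in> {tf B j |B j. pos B \<and> j \<in> \<int>}"
    then obtain B j where x: "x = tf B j" "pos B" "j \<in> \<int>" by blast
    have m: "(vector [j, 0], B) \<in> Mex" using x by (simp add: Mex_def pos_def Zl_def vector_2)
    have "conj_aut Mcm (vector [j, 0], B) = tf B j" using conj_tf[OF Mex_NAex[OF m]] by (simp add: vector_2)
    then show "x \<in> Inn Mcm" using m x by (force simp: Inn_def Mcm_eq)
  qed
qed

lemma tf_auto: "Q4 B \<Longrightarrow> j \<in> \<int> \<Longrightarrow> tf B j \<in> auto (Mgrp Mcm)"
proof -
  assume B: "Q4 B" and j: "j \<in> \<int>"
  have g: "(vector [j, 0], B) \<in> NAex" using B j by (simp add: NAex_def vector_2)
  show ?thesis using conj_auto[OF g] conj_tf[OF g] by (simp add: vector_2)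
qed


definition Pm :: "real^2 \<Rightarrow> real^2^2" where "Pm p = vector [vector [p$1, p$2], vector [p$2, p$1]]"

lemma Pm_apply [simp]: "(Pm p *v v)$1 = p$1 * v$1 + p$2 * v$2" "(Pm p *v v)$2 = p$2 * v$1 + p$1 * v$2"
  by (simp_all add: Pm_def matrix_vector_mult_def sum_2 vector_2)

lemma Mex_I: "n \<in> Zl \<Longrightarrow> (n, mat 1) \<in> Mex" and Mex_A: "n \<in> Zl \<Longrightarrow> (n, matA) \<in> Mex"
  by (simp_all add: Mex_def)

lemma Mex_cases: "x \<in> Mex \<Longrightarrow> (\<And>n. n \<in> Zl \<Longrightarrow> x = (n, mat 1) \<Longrightarrow> P) \<Longrightarrow> (\<And>n. n \<in> Zl \<Longrightarrow> x = (n, matA) \<Longrightarrow> P) \<Longrightarrow> P"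
  by (cases x) (auto simp: Mex_def)

lemma axis_Zl: "axis 1 1 \<in> Zl" "axis 2 1 \<in> Zl" by (simp_all add: Zl_def axis_def)

lemma charT: assumes x: "x \<in> Mex"
  shows "snd x = mat 1 \<longleftrightarrow> (\<forall>y\<in>Mex. aff_mult x (aff_mult y y) = aff_mult (aff_mult y y) x)"
proof
  assume sx: "snd x = mat 1"
  show "\<forall>y\<in>Mex. aff_mult x (aff_mult y y) = aff_mult (aff_mult y y) x"
  proof
    fix y assume y: "y \<in> Mex"
    obtain n where xe: "x = (n, mat 1)" using x sx by (cases x) auto
    obtain m C where ye: "y = (m, C)" and C: "C = mat 1 \<or> C = matA" using y by (cases y) (auto simp: Mex_def)
    have CC: "C ** C = mat 1" using C by auto
    show "aff_mult x (aff_mult y y) = aff_mult (aff_mult y y) x"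
      using CC by (simp add: xe ye matrix_mul_lid matrix_mul_rid matrix_vector_mul_lid add.commute add.left_commute)
  qed
next
  assume r: "\<forall>y\<in>Mex. aff_mult x (aff_mult y y) = aff_mult (aff_mult y y) x"
  show "snd x = mat 1"
  proof (rule ccontr)
    assume "snd x \<noteq> mat 1"
    then obtain n where xe: "x = (n, matA)" using x by (cases x) (auto simp: Mex_def)
    have y: "(axis 1 1, mat 1) \<in> Mex" by (simp add: Mex_I axis_Zl)
    have "aff_mult x (aff_mult (axis 1 1, mat 1) (axis 1 1, mat 1)) = aff_mult (aff_mult (axis 1 1, mat 1) (axis 1 1, mat 1)) x"
      using r y by blast
    then have "(n + matA *v (axis 1 1 + axis 1 1))$1 = (axis 1 1 + axis 1 1 + n)$1"
      by (simp add: xe matrix_vector_mul_lid matrix_mul_lid)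
    then show False by (simp add: axis_def)
  qed
qed

lemma auto_tf: assumes h: "h \<in> auto (Mgrp Mcm)" shows "\<exists>B j. Q4 B \<and> j \<in> \<int> \<and> h = tf B j"
proof -
  have hh: "h \<in> hom (Mgrp Mcm) (Mgrp Mcm)" and hb: "h \<in> Bij Mex" using h by (simp_all add: auto_def)
  have hom: "h (aff_mult x y) = aff_mult (h x) (h y)" if "x \<in> Mex" "y \<in> Mex" for x y
    using hh that by (simp add: hom_def)
  have hin: "h x \<in> Mex" if "x \<in> Mex" for x using hh that by (auto simp: hom_def)
  have hext: "h \<in> extensional Mex" and surj: "h ` Mex = Mex" using hb by (simp_all add: Bij_def bij_betw_def)
  have hT: "snd (h x) = mat 1" if x: "x \<in> Mex" "snd x = mat 1" for x
  proof -
    have "\<forall>y'\<in>Mex. aff_mult (h x) (aff_mult y' y') = aff_mult (aff_mult y' y') (h x)"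
    proof
      fix y' assume "y' \<in> Mex"
      then obtain y where y: "y \<in> Mex" "y' = h y" using surj by blast
      have "aff_mult x (aff_mult y y) = aff_mult (aff_mult y y) x" using charT[OF x(1)] x(2) y(1) by blast
      then have "h (aff_mult x (aff_mult y y)) = h (aff_mult (aff_mult y y) x)" by simp
      then show "aff_mult (h x) (aff_mult y' y') = aff_mult (aff_mult y' y') (h x)"
        using y x(1) by (simp add: hom Mex_mult)
    qed
    then show ?thesis using charT[OF hin[OF x(1)]] by blast
  qed
  have A_in: "(0, matA) \<in> Mex" by (simp add: Mex_A)
  have I_in: "(0, mat 1) \<in> Mex" by (simp add: Mex_I)
  have h1: "h (0, mat 1) = (0, mat 1)"
  proof -
    have e: "h (0, mat 1) = aff_mult (h (0, mat 1)) (h (0, mat 1))"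
      using hom[OF I_in I_in] by (simp add: matrix_mul_lid)
    have "snd (h (0, mat 1)) = mat 1" using hT I_in by simp
    then obtain q where q: "h (0, mat 1) = (q, mat 1)" by (cases "h (0, mat 1)") auto
    then show ?thesis using e by (simp add: matrix_vector_mul_lid matrix_mul_lid)
  qed
  have hA: "snd (h (0, matA)) = matA"
  proof (rule ccontr)
    assume nA: "snd (h (0, matA)) \<noteq> matA"
    then have sA: "snd (h (0, matA)) = mat 1" using hin[OF A_in] by (auto simp: Mex_def)
    have "snd (h x) = mat 1" if "x \<in> Mex" for x
      using that
    proof (rule Mex_cases)
      fix n assume "n \<in> Zl" "x = (n, mat 1)" then show ?thesis using hT that by simp
    next
      fix n assume n: "n \<in> Zl" "x = (n, matA)"
      then have "x = aff_mult (n, mat 1) (0, matA)" by (simp add: matrix_mul_lid)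
      then have "h x = aff_mult (h (n, mat 1)) (h (0, matA))" using hom[OF Mex_I[OF n(1)] A_in] by simp
      moreover have "snd (h (n, mat 1)) = mat 1" using hT Mex_I[OF n(1)] by simp
      ultimately show ?thesis using sA by (cases "h (n, mat 1)", cases "h (0, matA)") (simp add: matrix_mul_lid)
    qed
    moreover obtain x where "x \<in> Mex" "h x = (0, matA)" using surj A_in by force
    ultimately show False by fastforce
  qed
  obtain m where m: "h (0, matA) = (m, matA)" "m \<in> Zl" using hin[OF A_in] hA
    by (cases "h (0, matA)") (auto simp: Mex_def)
  have "h (0, mat 1) = aff_mult (h (0, matA)) (h (0, matA))" using hom[OF A_in A_in] by simp
  then have "(m + matA *v m, mat 1) = (0, mat 1)" using h1 m by simp
  then have mA: "m + matA *v m = 0" by simp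
  define j where "j = m$1"
  have mw: "m = wv j" using mA by (simp add: j_def vec_eq_iff forall_2)
  have jZ: "j \<in> \<int>" using m(2) by (simp add: j_def Zl_def)
  obtain p where p: "h (axis 1 1, mat 1) = (p, mat 1)" "p \<in> Zl"
    using hin[OF Mex_I[OF axis_Zl(1)]] hT[OF Mex_I[OF axis_Zl(1)]] by (cases "h (axis 1 1, mat 1)") (auto simp: Mex_def)
  have g2: "aff_mult (aff_mult (0, matA) (axis 1 1, mat 1)) (0, matA) = (axis 2 1, mat 1)"
    by (simp add: matrix_mul_rid vec_eq_iff forall_2 axis_def)
  have e1in: "(axis 1 1, mat 1) \<in> Mex" by (rule Mex_I[OF axis_Zl(1)])
  have "h (aff_mult (aff_mult (0, matA) (axis 1 1, mat 1)) (0, matA)) = aff_mult (aff_mult (h (0, matA)) (h (axis 1 1, mat 1))) (h (0, matA))"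
    by (simp only: hom[OF Mex_mult[OF A_in e1in] A_in] hom[OF A_in e1in])
  then have "h (axis 2 1, mat 1) = aff_mult (aff_mult (h (0, matA)) (h (axis 1 1, mat 1))) (h (0, matA))"
    by (simp only: g2)
  also have "\<dots> = (m + matA *v p + matA *v m, mat 1)" using m p by (simp add: matrix_mul_rid matrix_vector_right_distrib)
  also have "\<dots> = (matA *v p, mat 1)" using mA by (simp add: algebra_simps)
  finally have q: "h (axis 2 1, mat 1) = (matA *v p, mat 1)" .
  have inv1: "h (- axis 1 1, mat 1) = (- p, mat 1)"
  proof -
    have z: "- axis 1 1 \<in> Zl" using Zl_neg[OF axis_Zl(1)] .
    obtain r where r: "h (- axis 1 1, mat 1) = (r, mat 1)" using hT[OF Mex_I[OF z]] by (cases "h (- axis 1 1, mat 1)") auto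
    have eq: "(0, mat 1) = aff_mult (axis 1 1, mat 1) (- axis 1 1, mat 1)" by (simp add: matrix_mul_lid matrix_vector_mul_lid)
    have "h (0, mat 1) = aff_mult (h (axis 1 1, mat 1)) (h (- axis 1 1, mat 1))"
      by (subst eq) (rule hom[OF Mex_I[OF axis_Zl(1)] Mex_I[OF z]])
    then have "(0, mat 1) = (p + r, mat 1)" using h1 p r by (simp add: matrix_vector_mul_lid matrix_mul_lid)
    then have "r = - p" by (simp add: eq_neg_iff_add_eq_0 add.commute)
    then show ?thesis using r by simp
  qed
  have inv2: "h (- axis 2 1, mat 1) = (- (matA *v p), mat 1)"
  proof -
    have z: "- axis 2 1 \<in> Zl" using Zl_neg[OF axis_Zl(2)] .
    obtain r where r: "h (- axis 2 1, mat 1) = (r, mat 1)" using hT[OF Mex_I[OF z]] by (cases "h (- axis 2 1, mat 1)") auto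
    have eq: "(0, mat 1) = aff_mult (axis 2 1, mat 1) (- axis 2 1, mat 1)" by (simp add: matrix_mul_lid matrix_vector_mul_lid)
    have "h (0, mat 1) = aff_mult (h (axis 2 1, mat 1)) (h (- axis 2 1, mat 1))"
      by (subst eq) (rule hom[OF Mex_I[OF axis_Zl(2)] Mex_I[OF z]])
    then have "(0, mat 1) = (matA *v p + r, mat 1)" using h1 q r by (simp add: matrix_vector_mul_lid matrix_mul_lid)
    then have "r = - (matA *v p)" by (simp add: eq_neg_iff_add_eq_0 add.commute)
    then show ?thesis using r by simp
  qed
  have Pm0: "Pm p *v 0 = 0" by (simp add: vec_eq_iff forall_2)
  have v00: "vector [0, 0] = (0::real^2)" by (simp add: vec_eq_iff forall_2 vector_2)
  have vZ: "(vector [of_int i, of_int k], mat 1) \<in> Mex" for i k :: int by (simp add: Mex_I Zl_def vector_2)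
  have lat0: "h (vector [0, of_int k], mat 1) = (Pm p *v vector [0, of_int k], mat 1)" for k :: int
  proof (induction k rule: int_induct[where k=0])
    case base then show ?case using h1 by (simp add: v00)
  next
    case (step1 i)
    have "h (vector [0, of_int (i+1)], mat 1) = h (aff_mult (vector [0, of_int i], mat 1) (axis 2 1, mat 1))"
      by (rule arg_cong[where f=h]) (simp add: vec_eq_iff forall_2 vector_2 axis_def matrix_mul_lid matrix_vector_mul_lid)
    also have "\<dots> = aff_mult (h (vector [0, of_int i], mat 1)) (h (axis 2 1, mat 1))"
      by (rule hom) (use vZ[of 0 i] Mex_I[OF axis_Zl(2)] in simp_all)
    also have "\<dots> = (Pm p *v vector [0, of_int (i+1)], mat 1)" using step1(2) q
      by (simp add: matrix_mul_lid vec_eq_iff forall_2 vector_2 algebra_simps)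
    finally show ?case .
  next
    case (step2 i)
    have "h (vector [0, of_int (i-1)], mat 1) = h (aff_mult (vector [0, of_int i], mat 1) (- axis 2 1, mat 1))"
      by (rule arg_cong[where f=h]) (simp add: vec_eq_iff forall_2 vector_2 axis_def matrix_mul_lid matrix_vector_mul_lid)
    also have "\<dots> = aff_mult (h (vector [0, of_int i], mat 1)) (h (- axis 2 1, mat 1))"
      by (rule hom) (use vZ[of 0 i] Mex_I[OF Zl_neg[OF axis_Zl(2)]] in simp_all)
    also have "\<dots> = (Pm p *v vector [0, of_int (i-1)], mat 1)" using step2(2) inv2
      by (simp add: matrix_mul_lid vec_eq_iff forall_2 vector_2 algebra_simps)
    finally show ?case .
  qed
  have lat: "h (vector [of_int i, of_int k], mat 1) = (Pm p *v vector [of_int i, of_int k], mat 1)" for i k :: int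
  proof (induction i rule: int_induct[where k=0])
    case base then show ?case using lat0 by simp
  next
    case (step1 i)
    have "h (vector [of_int (i+1), of_int k], mat 1) = h (aff_mult (vector [of_int i, of_int k], mat 1) (axis 1 1, mat 1))"
      by (rule arg_cong[where f=h]) (simp add: vec_eq_iff forall_2 vector_2 axis_def matrix_mul_lid matrix_vector_mul_lid)
    also have "\<dots> = aff_mult (h (vector [of_int i, of_int k], mat 1)) (h (axis 1 1, mat 1))"
      by (rule hom) (use vZ[of i k] Mex_I[OF axis_Zl(1)] in simp_all)
    also have "\<dots> = (Pm p *v vector [of_int (i+1), of_int k], mat 1)" using step1(2) p
      by (simp add: matrix_mul_lid vec_eq_iff forall_2 vector_2 algebra_simps)
    finally show ?case .
  next
    case (step2 i)
    have "h (vector [of_int (i-1), of_int k], mat 1) = h (aff_mult (vector [of_int i, of_int k], mat 1) (- axis 1 1, mat 1))"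
      by (rule arg_cong[where f=h]) (simp add: vec_eq_iff forall_2 vector_2 axis_def matrix_mul_lid matrix_vector_mul_lid)
    also have "\<dots> = aff_mult (h (vector [of_int i, of_int k], mat 1)) (h (- axis 1 1, mat 1))"
      by (rule hom) (use vZ[of i k] Mex_I[OF Zl_neg[OF axis_Zl(1)]] in simp_all)
    also have "\<dots> = (Pm p *v vector [of_int (i-1), of_int k], mat 1)" using step2(2) inv1
      by (simp add: matrix_mul_lid vec_eq_iff forall_2 vector_2 algebra_simps)
    finally show ?case .
  qed
  have hI: "h (n, mat 1) = (Pm p *v n, mat 1)" if n: "n \<in> Zl" for n
  proof -
    obtain i k where ik: "n$1 = of_int i" "n$2 = of_int k" using n unfolding Zl_def by (auto elim!: Ints_cases)
    have "n = vector [of_int i, of_int k]" using ik vec2_eq[of n] by simp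
    then show ?thesis using lat by simp
  qed
  have hAx: "h (n, matA) = (Pm p *v n + wv j, matA)" if n: "n \<in> Zl" for n
  proof -
    have "h (n, matA) = h (aff_mult (n, mat 1) (0, matA))" by (simp add: matrix_mul_lid)
    also have "\<dots> = aff_mult (h (n, mat 1)) (h (0, matA))" by (rule hom[OF Mex_I[OF n] A_in])
    also have "\<dots> = (Pm p *v n + wv j, matA)" using hI[OF n] m mw by (simp add: matrix_mul_lid matrix_vector_mul_lid)
    finally show ?thesis .
  qed
  have PQ: "Q4 (Pm p)"
  proof -
    obtain x where x: "x \<in> Mex" "h x = (axis 1 1, mat 1)" using surj Mex_I[OF axis_Zl(1)] by force
    obtain n where n: "n \<in> Zl" "x = (n, mat 1)"
    proof (rule Mex_cases[OF x(1)])
      fix n assume "n \<in> Zl" "x = (n, mat 1)" then show ?thesis using that by blast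
    next
      fix n assume "n \<in> Zl" "x = (n, matA)"
      then have "h x = (Pm p *v n + wv j, matA)" using hAx by simp
      then show ?thesis using x(2) by simp
    qed
    have "Pm p *v n = axis 1 1" using x(2) n hI by simp
    then have "(Pm p *v n)$1 = 1" "(Pm p *v n)$2 = 0" by (simp_all add: axis_def)
    then have eqs: "p$1 * n$1 + p$2 * n$2 = 1" "p$2 * n$1 + p$1 * n$2 = 0" by simp_all
    have "(p$1 = 1 \<and> p$2 = 0) \<or> (p$1 = -1 \<and> p$2 = 0) \<or> (p$1 = 0 \<and> p$2 = 1) \<or> (p$1 = 0 \<and> p$2 = -1)"
      by (rule real_int_lemma) (use p(2) n(1) eqs in \<open>simp_all add: Zl_def\<close>)
    then show ?thesis unfolding Q4_def
      by (elim disjE) (simp_all add: Pm_def mat_eq2 vector_2 mat_def)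
  qed
  have "h = tf (Pm p) j"
  proof (rule ext)
    fix x show "h x = tf (Pm p) j x"
    proof (cases "x \<in> Mex")
      case True
      then show ?thesis
      proof (rule Mex_cases)
        fix n assume "n \<in> Zl" "x = (n, mat 1)" then show ?thesis using hI True by (simp add: tf_def)
      next
        fix n assume "n \<in> Zl" "x = (n, matA)" then show ?thesis using hAx True by (simp add: tf_def)
      qed
    next
      case False then show ?thesis using extensional_arb[OF hext False] by (simp add: tf_def)
    qed
  qed
  then show ?thesis using PQ jZ by blast
qed


abbreviation "Aut \<equiv> AutoGroup (Mgrp Mcm)"

lemma Q4_commute: "Q4 B \<Longrightarrow> Q4 C \<Longrightarrow> B ** C = C ** B"
  unfolding Q4_def by (elim disjE; hypsubst; simp add: matrix_mul_lid matrix_mul_rid)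

lemma tau_int: "k \<in> \<int> \<Longrightarrow> tau B * k \<in> \<int>"
  using tau_pm[of B] by auto

lemma Inn_mem: assumes "Q4 B" "j \<in> \<int>" shows "tf B j \<in> Inn Mcm \<longleftrightarrow> pos B"
proof
  assume "tf B j \<in> Inn Mcm"
  then obtain P l where "tf B j = tf P l" "pos P" "l \<in> \<int>" by (auto simp: Inn_eq)
  then show "pos B" using tf_eq[OF assms(1) pos_Q4] by blast
qed (use assms in \<open>auto simp: Inn_eq\<close>)

lemma tf_mult: "Q4 B \<Longrightarrow> Q4 C \<Longrightarrow> j \<in> \<int> \<Longrightarrow> k \<in> \<int> \<Longrightarrow> tf B j \<otimes>\<^bsub>Aut\<^esub> tf C k = tf (B ** C) (j + tau B * k)"
  by (simp add: Aut_mult tf_auto tf_comp)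

lemma Aut_one_tf: "\<one>\<^bsub>Aut\<^esub> = tf (mat 1) 0"
  by (simp add: Aut_one tf_one)

lemma inv_tf: assumes x: "x = tf B j" "Q4 B" "j \<in> \<int>"
  obtains B' j' where "inv\<^bsub>Aut\<^esub> x = tf B' j'" "Q4 B'" "j' \<in> \<int>" "B ** B' = mat 1"
proof -
  interpret Au: group Aut by (rule group_Aut)
  have xc: "x \<in> carrier Aut" using x tf_auto by simp
  have "inv\<^bsub>Aut\<^esub> x \<in> auto (Mgrp Mcm)" using Au.inv_closed[OF xc] by simp
  then obtain B' j' where i: "inv\<^bsub>Aut\<^esub> x = tf B' j'" "Q4 B'" "j' \<in> \<int>" using auto_tf by blast
  have "x \<otimes>\<^bsub>Aut\<^esub> inv\<^bsub>Aut\<^esub> x = \<one>\<^bsub>Aut\<^esub>" using Au.r_inv[OF xc] .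
  then have "tf (B ** B') (j + tau B * j') = tf (mat 1) 0" using x i by (simp add: tf_mult Aut_one_tf)
  then have "B ** B' = mat 1" using tf_eq[OF Q4_mult[OF x(2) i(2)]] by simp
  then show ?thesis using that i by blast
qed

lemma subgroup_Inn: "subgroup (Inn Mcm) Aut"
proof (rule group.subgroupI[OF group_Aut])
  show "Inn Mcm \<subseteq> carrier Aut" by (auto simp: Inn_eq intro: tf_auto pos_Q4)
  show "Inn Mcm \<noteq> {}" using Inn_mem[of "mat 1" 0] by auto
next
  fix a assume "a \<in> Inn Mcm"
  then obtain B j where a: "a = tf B j" "pos B" "j \<in> \<int>" by (auto simp: Inn_eq)
  obtain B' j' where i: "inv\<^bsub>Aut\<^esub> a = tf B' j'" "Q4 B'" "j' \<in> \<int>" "B ** B' = mat 1"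
    using inv_tf[OF a(1) pos_Q4[OF a(2)] a(3)] by blast
  have "B' = B ** (B ** B')" using Q4_sq[OF pos_Q4[OF a(2)]] by (simp add: matrix_mul_assoc matrix_mul_lid)
  then have "B' = B" using i(4) by (simp add: matrix_mul_rid)
  then show "inv\<^bsub>Aut\<^esub> a \<in> Inn Mcm" using i a by (simp add: Inn_mem)
next
  fix a b assume "a \<in> Inn Mcm" "b \<in> Inn Mcm"
  then obtain B j C k where a: "a = tf B j" "pos B" "j \<in> \<int>" and b: "b = tf C k" "pos C" "k \<in> \<int>"
    by (auto simp: Inn_eq)
  show "a \<otimes>\<^bsub>Aut\<^esub> b \<in> Inn Mcm"
    using a b pos_Q4[OF a(2)] pos_Q4[OF b(2)] pos_mult[OF pos_Q4[OF a(2)] pos_Q4[OF b(2)]]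
    by (simp add: tf_mult Inn_mem Q4_mult Ints_add tau_int)
qed

lemma normal_Inn: "Inn Mcm \<lhd> Aut"
  unfolding group.normal_inv_iff[OF group_Aut]
proof (intro conjI subgroup_Inn ballI)
  fix x h assume x: "x \<in> carrier Aut" and h: "h \<in> Inn Mcm"
  have "\<exists>B j. Q4 B \<and> j \<in> \<int> \<and> x = tf B j" using x by (intro auto_tf) simp
  then obtain B j where xe: "x = tf B j" "Q4 B" "j \<in> \<int>" by blast
  obtain P l where he: "h = tf P l" "pos P" "l \<in> \<int>" using h by (auto simp: Inn_eq)
  obtain B' j' where i: "inv\<^bsub>Aut\<^esub> x = tf B' j'" "Q4 B'" "j' \<in> \<int>" "B ** B' = mat 1"
    using inv_tf[OF xe] by blast
  have P: "Q4 P" using pos_Q4[OF he(2)] .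
  have "B ** P ** B' = P ** (B ** B')" using Q4_commute[OF xe(2) P] by (simp add: matrix_mul_assoc)
  then have BPB: "B ** P ** B' = P" using i(4) by (simp add: matrix_mul_rid)
  have "x \<otimes>\<^bsub>Aut\<^esub> h \<otimes>\<^bsub>Aut\<^esub> inv\<^bsub>Aut\<^esub> x = tf (B ** P ** B') (j + tau B * l + tau (B ** P) * j')"
    using xe he i P by (simp add: tf_mult Q4_mult Ints_add tau_int)
  then show "x \<otimes>\<^bsub>Aut\<^esub> h \<otimes>\<^bsub>Aut\<^esub> inv\<^bsub>Aut\<^esub> x \<in> Inn Mcm"
    using BPB he xe i P by (simp add: Inn_mem Ints_add tau_int)
qed

definition cc :: "aff \<Rightarrow> aff" where "cc = tf (- mat 1) 0"

definition co :: "bool \<Rightarrow> aff \<Rightarrow> aff" where "co b = (if b then \<one>\<^bsub>Aut\<^esub> else cc)"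

lemma cc_auto: "cc \<in> carrier Aut" by (simp add: cc_def tf_auto)
lemma co_auto: "co b \<in> carrier Aut"
proof -
  interpret Au: group Aut by (rule group_Aut)
  show ?thesis using cc_auto Au.one_closed by (simp only: co_def split: if_splits) simp
qed

lemma co_mult: "co a \<otimes>\<^bsub>Aut\<^esub> co b = co (a = b)"
proof -
  interpret Au: group Aut by (rule group_Aut)
  have "cc \<otimes>\<^bsub>Aut\<^esub> cc = \<one>\<^bsub>Aut\<^esub>" by (simp add: cc_def tf_mult Aut_one_tf)
  moreover have "\<one>\<^bsub>Aut\<^esub> \<otimes>\<^bsub>Aut\<^esub> \<one>\<^bsub>Aut\<^esub> = \<one>\<^bsub>Aut\<^esub>" by (rule Au.l_one[OF Au.one_closed])
  moreover have "\<one>\<^bsub>Aut\<^esub> \<otimes>\<^bsub>Aut\<^esub> cc = cc" by (rule Au.l_one[OF cc_auto])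
  moreover have "cc \<otimes>\<^bsub>Aut\<^esub> \<one>\<^bsub>Aut\<^esub> = cc" by (rule Au.r_one[OF cc_auto])
  ultimately show ?thesis by (cases a; cases b) (simp_all only: co_def if_True if_False simp_thms)
qed

lemma coset_tf: assumes "Q4 B" "j \<in> \<int>" shows "Inn Mcm #>\<^bsub>Aut\<^esub> tf B j = Inn Mcm #>\<^bsub>Aut\<^esub> co (pos B)"
proof (cases "pos B")
  case True
  then have "tf B j \<in> Inn Mcm" using Inn_mem[OF assms] by simp
  then show ?thesis using True group.coset_join2[OF group_Aut _ subgroup_Inn] tf_auto[OF assms]
    group.coset_mult_one[OF group_Aut] subgroup.subset[OF subgroup_Inn] by (simp add: co_def)
next
  case False
  have mB: "Q4 (- B)" using assms(1) by (auto simp: Q4_def)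
  have pm: "pos (- B)" using False assms(1) by (auto simp: Q4_def)
  have "tf (- B) j \<otimes>\<^bsub>Aut\<^esub> cc = tf B j" using mB assms
    by (simp add: cc_def tf_mult matrix_mul_rid)
  moreover have "tf (- B) j \<in> Inn Mcm" using Inn_mem[OF mB assms(2)] pm by simp
  ultimately have "tf B j \<in> Inn Mcm #>\<^bsub>Aut\<^esub> cc" unfolding r_coset_def by force
  then have "Inn Mcm #>\<^bsub>Aut\<^esub> cc = Inn Mcm #>\<^bsub>Aut\<^esub> tf B j"
    by (rule group.repr_independence[OF group_Aut _ cc_auto subgroup_Inn])
  then show ?thesis using False by (simp add: co_def)
qed

lemma Omega_star: assumes g: "g \<in> NAex" shows "Omega Mcm (star Mcm g) = Inn Mcm #>\<^bsub>Aut\<^esub> co (pos (snd g))"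
proof -
  have "\<exists>g'. g' \<in> NA Mcm \<and> star Mcm g' = star Mcm g" using g NA_eq by blast
  then have s: "(SOME g'. g' \<in> NA Mcm \<and> star Mcm g' = star Mcm g) \<in> NA Mcm \<and>
      star Mcm (SOME g'. g' \<in> NA Mcm \<and> star Mcm g' = star Mcm g) = star Mcm g" by (rule someI_ex)
  define g' where "g' = (SOME g'. g' \<in> NA Mcm \<and> star Mcm g' = star Mcm g)"
  have g'N: "g' \<in> NAex" and sg: "star Mcm g' = star Mcm g" using s NA_eq by (simp_all add: g'_def)
  obtain a B where ge': "g' = (a, B)" by (cases g')
  obtain b C where ge: "g = (b, C)" by (cases g)
  have B: "Q4 B" "a$1 - a$2 \<in> \<int>" using g'N ge' by (auto simp: NAex_def)
  have pB: "pos B \<longleftrightarrow> pos C" using star_eq_iff[of a B b C] g'N g sg ge ge' by simp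
  have "Omega Mcm (star Mcm g) = Inn Mcm #>\<^bsub>Aut\<^esub> conj_aut Mcm g'" by (simp add: Omega_def g'_def)
  also have "\<dots> = Inn Mcm #>\<^bsub>Aut\<^esub> tf B (a$1 - a$2)" using conj_tf g'N ge' by simp
  also have "\<dots> = Inn Mcm #>\<^bsub>Aut\<^esub> co (pos B)" by (rule coset_tf[OF B])
  finally show ?thesis using pB ge by simp
qed


lemma Omega_iso:
  "Omega Mcm \<in> iso ((AffGrp Mcm)\<lparr>carrier := {\<one>\<^bsub>AffGrp Mcm\<^esub>, star Mcm (0, - mat 1)}\<rparr>) (Out Mcm)"
proof -
  interpret Au: group Aut by (rule group_Aut)
  interpret Nn: normal "Inn Mcm" Aut by (rule normal_Inn)
  let ?G = "(AffGrp Mcm)\<lparr>carrier := {\<one>\<^bsub>AffGrp Mcm\<^esub>, star Mcm (0, - mat 1)}\<rparr>"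
  have n1: "(0, mat 1) \<in> NAex" and n2: "(0, - mat 1) \<in> NAex" by (simp_all add: NAex_def)
  have one1: "\<one>\<^bsub>AffGrp Mcm\<^esub> = star Mcm (0, mat 1)" by (simp add: AffGrp_def BijGroup_def star_one)
  have carrG: "carrier ?G = star Mcm ` {(0, mat 1), (0, - mat 1)}" using one1 by simp
  have multG: "x \<otimes>\<^bsub>AffGrp Mcm\<^esub> y = x \<otimes>\<^bsub>BijGroup (Orb Mcm)\<^esub> y" for x y by (simp add: AffGrp_def)
  have cO: "carrier (Out Mcm) = rcosets\<^bsub>Aut\<^esub> (Inn Mcm)" by (simp add: Out_def FactGroup_def)
  have mO: "X \<otimes>\<^bsub>Out Mcm\<^esub> Y = X <#>\<^bsub>Aut\<^esub> Y" for X Y by (simp add: Out_def)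
  have Isub: "Inn Mcm \<subseteq> carrier Aut" using subgroup.subset[OF subgroup_Inn] .
  have rc: "rcosets\<^bsub>Aut\<^esub> (Inn Mcm) = {Inn Mcm #>\<^bsub>Aut\<^esub> co True, Inn Mcm #>\<^bsub>Aut\<^esub> co False}"
  proof
    show "rcosets\<^bsub>Aut\<^esub> (Inn Mcm) \<subseteq> {Inn Mcm #>\<^bsub>Aut\<^esub> co True, Inn Mcm #>\<^bsub>Aut\<^esub> co False}"
    proof
      fix R assume "R \<in> rcosets\<^bsub>Aut\<^esub> (Inn Mcm)"
      then obtain x where x: "x \<in> carrier Aut" "R = Inn Mcm #>\<^bsub>Aut\<^esub> x" by (auto simp: RCOSETS_def)
      have "\<exists>B j. Q4 B \<and> j \<in> \<int> \<and> x = tf B j" using x by (intro auto_tf) simp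
      then obtain B j where xe: "x = tf B j" "Q4 B" "j \<in> \<int>" by blast
      show "R \<in> {Inn Mcm #>\<^bsub>Aut\<^esub> co True, Inn Mcm #>\<^bsub>Aut\<^esub> co False}"
        using coset_tf[OF xe(2,3)] x xe by (cases "pos B") auto
    qed
    show "{Inn Mcm #>\<^bsub>Aut\<^esub> co True, Inn Mcm #>\<^bsub>Aut\<^esub> co False} \<subseteq> rcosets\<^bsub>Aut\<^esub> (Inn Mcm)"
      using Au.rcosetsI[OF Isub co_auto] by auto
  qed
  have ne: "Inn Mcm #>\<^bsub>Aut\<^esub> co True \<noteq> Inn Mcm #>\<^bsub>Aut\<^esub> co False"
  proof
    assume e: "Inn Mcm #>\<^bsub>Aut\<^esub> co True = Inn Mcm #>\<^bsub>Aut\<^esub> co False"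
    have "Inn Mcm #>\<^bsub>Aut\<^esub> co True = Inn Mcm" using Isub by (simp add: co_def)
    moreover have "cc \<in> Inn Mcm #>\<^bsub>Aut\<^esub> co False" using Au.rcos_self[OF cc_auto subgroup_Inn] by (simp add: co_def)
    ultimately have "cc \<in> Inn Mcm" using e by simp
    then show False using Inn_mem[of "- mat 1" 0] by (simp add: cc_def)
  qed
  have Om: "Omega Mcm (star Mcm g) = Inn Mcm #>\<^bsub>Aut\<^esub> co (pos (snd g))" if "g \<in> NAex" for g
    using Omega_star[OF that] .
  have hom: "Omega Mcm \<in> hom ?G (Out Mcm)"
  proof (rule homI)
    fix x assume "x \<in> carrier ?G"
    then obtain g where g: "g \<in> NAex" "x = star Mcm g" using carrG n1 n2 by auto
    show "Omega Mcm x \<in> carrier (Out Mcm)" using g Om cO rc by (cases "pos (snd g)") simp_all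
  next
    fix x y assume "x \<in> carrier ?G" "y \<in> carrier ?G"
    then obtain g h where g: "g \<in> NAex" "x = star Mcm g" and h: "h \<in> NAex" "y = star Mcm h"
      using carrG n1 n2 by auto
    obtain a B b C where e: "g = (a, B)" "h = (b, C)" by (cases g; cases h)
    have B: "Q4 B" and C: "Q4 C" using g h e by (auto simp: NAex_def)
    have "Omega Mcm (x \<otimes>\<^bsub>?G\<^esub> y) = Omega Mcm (star Mcm (aff_mult g h))"
      using g h by (simp add: multG mult_star)
    also have "\<dots> = Inn Mcm #>\<^bsub>Aut\<^esub> co (pos (B ** C))" using Om[OF NAex_mult[OF g(1) h(1)]] e by simp
    also have "\<dots> = Inn Mcm #>\<^bsub>Aut\<^esub> (co (pos B) \<otimes>\<^bsub>Aut\<^esub> co (pos C))" using pos_mult[OF B C] by (simp add: co_mult)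
    also have "\<dots> = (Inn Mcm #>\<^bsub>Aut\<^esub> co (pos B)) <#>\<^bsub>Aut\<^esub> (Inn Mcm #>\<^bsub>Aut\<^esub> co (pos C))"
      by (rule Nn.rcos_sum[symmetric, OF co_auto co_auto])
    also have "\<dots> = Omega Mcm x \<otimes>\<^bsub>Out Mcm\<^esub> Omega Mcm y" using g h e Om by (simp add: mO)
    finally show "Omega Mcm (x \<otimes>\<^bsub>?G\<^esub> y) = Omega Mcm x \<otimes>\<^bsub>Out Mcm\<^esub> Omega Mcm y" .
  qed
  have O1: "Omega Mcm (star Mcm (0, mat 1)) = Inn Mcm #>\<^bsub>Aut\<^esub> co True" using Om[OF n1] by simp
  have O2: "Omega Mcm (star Mcm (0, - mat 1)) = Inn Mcm #>\<^bsub>Aut\<^esub> co False" using Om[OF n2] by simp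
  have bij: "bij_betw (Omega Mcm) (carrier ?G) (carrier (Out Mcm))"
  proof -
    have "inj_on (Omega Mcm) {star Mcm (0, mat 1), star Mcm (0, - mat 1)}"
      using O1 O2 ne by (auto simp: inj_on_def)
    moreover have "Omega Mcm ` {star Mcm (0, mat 1), star Mcm (0, - mat 1)} = rcosets\<^bsub>Aut\<^esub> (Inn Mcm)"
      using O1 O2 rc by auto
    ultimately show ?thesis using one1 cO by (simp add: bij_betw_def)
  qed
  show ?thesis using hom bij by (simp add: iso_def)
qed

theorem lemma14:
  shows "(\<exists>f. f \<in> iso (SymGrp Mcm) O2 \<and> homeo_Sym_O2 Mcm f)
       \<and> Sym Mcm = Aff Mcm
       \<and> Omega Mcm \<in> iso ((AffGrp Mcm)\<lparr>carrier := {\<one>\<^bsub>AffGrp Mcm\<^esub>, star Mcm (0, - mat 1)}\<rparr>)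
                        (Out Mcm)"
  using fO_iso fO_homeo Sym_eq Omega_iso by blast


end
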